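(* Let $\mathcal G$ be a topological $2$-group, $X$ a topological space, $\mathcal U=\{U_i\}_{i\in I}$ an open cover of $X$ and $c=(\mathbf x,\mathbf e)$ a $\mathcal G$-valued Čech cocycle subordinate to $\mathcal U$. Then the functor $\pi_c\colon P_c\to\overline X$ defined below is a principal $\mathcal G$-bundle over $X$ admitting $\mathcal U$ as a trivializing cover.
   Context: Groupoids internal to a category are written $P=(P_1\rightrightarrows P_0)$ with source $s$, target $t$, and product $g*h$ (defined when $t(g)=s(h)$, meaning "first $g$ then $h$"). A topological $2$-space is a groupoid internal to topological spaces; a topological space $X$ gives $\overline X=(X\rightrightarrows X)$. A topological $2$-group $\mathcal G=(\mathcal G_1\rightrightarrows\mathcal G_0)$ is a groupoid internal to topological groups; then $g*h=h1_{t(g)^{-1}}g$, $\bar g=1_{s(g)}g^{-1}1_{t(g)}$. Let $\mathcal E=\mathrm{Ker}(s)\subset\mathcal G_1$, with $\mathcal G_0$ acting by ${}^xe=1_xe1_{x^{-1}}$. A $\mathcal G$-$2$-space is a topological $2$-space with a continuous strict right action functor of $\mathcal G$; a $\mathcal G$-functor is a $\mathcal G$-equivariant continuous functor; a $\mathcal G$-pseudo-inverse of a $\mathcal G$-functor $f\colon P\to Q$ is a $\mathcal G$-functor $g$ with $\mathcal G_0$-equivariant continuous natural isomorphisms $gf\Rightarrow\mathrm{id}_P$, $\mathrm{id}_Q\Rightarrow fg$; a $\mathcal G$-equivalence is a $\mathcal G$-functor having one. For a continuous functor $\pi\colon P\to\overline X$ from a $\mathcal G$-$2$-space, a trivializing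 chart is $(U,\psi,\phi,\varepsilon)$ with $U\subset X$ open, $\psi\colon P|_U\to\overline U\times\mathcal G$ a $\mathcal G$-equivalence, $\phi$ a $\mathcal G$-pseudo-inverse, $\varepsilon\colon\phi\psi\Rightarrow\mathrm{id}$ a $\mathcal G_0$-equivariant continuous natural isomorphism, with $\mathrm{pr}_1\psi=\pi|_U$ and $\pi|_U\phi=\mathrm{pr}_1$ ($P|_U$ the full subgroupoid on objects over $U$). An atlas is a family of trivializing charts whose $U$'s cover $X$; its cover is a trivializing cover. A principal $\mathcal G$-bundle over $X$ is such a $\pi$ admitting an atlas. Write $U_{i_1\cdots i_n}=U_{i_1}\cap\dots\cap U_{i_n}$. A $\mathcal G$-valued Čech cocycle subordinate to $\mathcal U$ is a pair of families of continuous maps $\mathbf x_{ij}\colon U_{ij}\to\mathcal G_0$, $\mathbf e_{ijk}\colon U_{ijk}\to\mathcal E$ with $t(\mathbf e_{ijk})\mathbf x_{ij}\mathbf x_{jk}=\mathbf x_{ik}$ on $U_{ijk}$ and $\mathbf e_{ikl}\mathbf e_{ijk}=\mathbf e_{ijl}\,{}^{\mathbf x_{ij}}\mathbf e_{jkl}$ on $U_{ijkl}$. The $2$-space $P_c$: $P_0=\coprod_iU_i\times\mathcal G_0$ (elements $(u,x)_i$), $P_1=\coprod_{i,j}U_{ij}\times\mathcal G_1$ (elements $(v,g)_{ij}$), $s((v,g)_{ij})=(v,s(g))_i$, $t((v,g)_{ij})=(v,\mathbf x_{ij}(v)^{-1}t(g))_j$, product $(v,g)_{ij}*(v,h)_{jk}=(v,\mathbf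 e_{ijk}(v)(g*(1_{\mathbf x_{ij}(v)}h)))_{ik}$, units $1_{(u,x)_i}=(u,\mathbf e_{iii}(u)^{-1}1_x)_{ii}$, inverses $\overline{(v,g)_{ij}}=(v,1_{\mathbf x_{ij}(v)^{-1}}\mathbf e_{iji}(v)^{-1}\mathbf e_{iii}(v)^{-1}\bar g)_{ji}$; right action $(u,x)_i\cdot y=(u,xy)_i$, $(v,g)_{ij}\cdot h=(v,gh)_{ij}$; and $\pi_c((u,x)_i)=u$, $\pi_c((v,g)_{ij})=v$. *)

theory Defs
  imports "HOL-Analysis.Analysis"
begin

section \<open>Topological 2-spaces (groupoids internal to Top)\<close>

text \<open>Objects and arrows carry topologies; cmp g h means first g then h
  (defined when tgt g = src h).\<close>

record ('o, 'a) gpd =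
  obT :: "'o topology"
  arT :: "'a topology"
  src :: "'a \<Rightarrow> 'o"
  tgt :: "'a \<Rightarrow> 'o"
  cmp :: "'a \<Rightarrow> 'a \<Rightarrow> 'a"
  idn :: "'o \<Rightarrow> 'a"
  inv :: "'a \<Rightarrow> 'a"

definition composable :: "('o, 'a, 'm) gpd_scheme \<Rightarrow> ('a \<times> 'a) set" where
  "composable P = {(g, h). g \<in> topspace (arT P) \<and> h \<in> topspace (arT P) \<and> tgt P g = src P h}"

definition topological_2space :: "('o, 'a, 'm) gpd_scheme \<Rightarrow> bool" where
  "topological_2space P \<longleftrightarrow>
     continuous_map (arT P) (obT P) (src P) \<and>
     continuous_map (arT P) (obT P) (tgt P) \<and>
     continuous_map (obT P) (arT P) (idn P) \<and>
     continuous_map (arT P) (arT P) (inv P) \<and>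
     continuous_map (subtopology (prod_topology (arT P) (arT P)) (composable P)) (arT P)
        (\<lambda>(g, h). cmp P g h) \<and>
     (\<forall>(g, h) \<in> composable P. src P (cmp P g h) = src P g \<and> tgt P (cmp P g h) = tgt P h) \<and>
     (\<forall>(g, h) \<in> composable P. \<forall>k \<in> topspace (arT P). tgt P h = src P k \<longrightarrow>
         cmp P (cmp P g h) k = cmp P g (cmp P h k)) \<and>
     (\<forall>x \<in> topspace (obT P). src P (idn P x) = x \<and> tgt P (idn P x) = x) \<and>
     (\<forall>g \<in> topspace (arT P). cmp P (idn P (src P g)) g = g \<and> cmp P g (idn P (tgt P g)) = g) \<and>
     (\<forall>g \<in> topspace (arT P). src P (inv P g) = tgt P g \<and> tgt P (inv P g) = src P g \<and>
         cmp P g (inv P g) = idn P (src P g) \<and> cmp P (inv P g) g = idn P (tgt P g))"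

definition disc :: "'x topology \<Rightarrow> ('x, 'x) gpd" where
  "disc X = \<lparr>obT = X, arT = X, src = id, tgt = id, cmp = (\<lambda>a b. a), idn = id, inv = id\<rparr>"

definition cont_functor :: "('o, 'a, 'm) gpd_scheme \<Rightarrow> ('p, 'b, 'n) gpd_scheme \<Rightarrow>
    ('o \<Rightarrow> 'p) \<Rightarrow> ('a \<Rightarrow> 'b) \<Rightarrow> bool" where
  "cont_functor P Q F0 F1 \<longleftrightarrow>
     continuous_map (obT P) (obT Q) F0 \<and> continuous_map (arT P) (arT Q) F1 \<and>
     (\<forall>g \<in> topspace (arT P). src Q (F1 g) = F0 (src P g) \<and> tgt Q (F1 g) = F0 (tgt P g)) \<and>
     (\<forall>(g, h) \<in> composable P. F1 (cmp P g h) = cmp Q (F1 g) (F1 h)) \<and>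
     (\<forall>x \<in> topspace (obT P). F1 (idn P x) = idn Q (F0 x))"

text \<open>Continuous natural transformation alpha from (F0,F1) to (H0,H1); all of
  these are natural isomorphisms since the target is a groupoid.\<close>

definition cont_nat_trans :: "('o, 'a, 'm) gpd_scheme \<Rightarrow> ('p, 'b, 'n) gpd_scheme \<Rightarrow>
    ('o \<Rightarrow> 'p) \<Rightarrow> ('a \<Rightarrow> 'b) \<Rightarrow> ('o \<Rightarrow> 'p) \<Rightarrow> ('a \<Rightarrow> 'b) \<Rightarrow> ('o \<Rightarrow> 'b) \<Rightarrow> bool" where
  "cont_nat_trans P Q F0 F1 H0 H1 \<alpha> \<longleftrightarrow>
     continuous_map (obT P) (arT Q) \<alpha> \<and>
     (\<forall>x \<in> topspace (obT P). src Q (\<alpha> x) = F0 x \<and> tgt Q (\<alpha> x) = H0 x) \<and>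
     (\<forall>g \<in> topspace (arT P). cmp Q (F1 g) (\<alpha> (tgt P g)) = cmp Q (\<alpha> (src P g)) (H1 g))"

section \<open>Topological groups and topological 2-groups\<close>

definition topological_group :: "'g topology \<Rightarrow> ('g \<Rightarrow> 'g \<Rightarrow> 'g) \<Rightarrow> ('g \<Rightarrow> 'g) \<Rightarrow> 'g \<Rightarrow> bool" where
  "topological_group T m i e \<longleftrightarrow>
     e \<in> topspace T \<and>
     continuous_map (prod_topology T T) T (\<lambda>(x, y). m x y) \<and>
     continuous_map T T i \<and>
     (\<forall>x \<in> topspace T. \<forall>y \<in> topspace T. \<forall>z \<in> topspace T. m (m x y) z = m x (m y z)) \<and>
     (\<forall>x \<in> topspace T. m e x = x \<and> m x e = x \<and> m (i x) x = e \<and> m x (i x) = e)"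

definition group_hom :: "'g topology \<Rightarrow> ('g \<Rightarrow> 'g \<Rightarrow> 'g) \<Rightarrow> ('h \<Rightarrow> 'h \<Rightarrow> 'h) \<Rightarrow> ('g \<Rightarrow> 'h) \<Rightarrow> bool" where
  "group_hom T m n f \<longleftrightarrow> (\<forall>x \<in> topspace T. \<forall>y \<in> topspace T. f (m x y) = n (f x) (f y))"

record ('o, 'a) twogrp = "('o, 'a) gpd" +
  omul :: "'o \<Rightarrow> 'o \<Rightarrow> 'o"
  oinv :: "'o \<Rightarrow> 'o"
  oone :: "'o"
  amul :: "'a \<Rightarrow> 'a \<Rightarrow> 'a"
  ainv :: "'a \<Rightarrow> 'a"
  aone :: "'a"

definition topological_2group :: "('o, 'a, 'm) twogrp_scheme \<Rightarrow> bool" where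
  "topological_2group G \<longleftrightarrow>
     topological_2space G \<and>
     topological_group (obT G) (omul G) (oinv G) (oone G) \<and>
     topological_group (arT G) (amul G) (ainv G) (aone G) \<and>
     group_hom (arT G) (amul G) (omul G) (src G) \<and>
     group_hom (arT G) (amul G) (omul G) (tgt G) \<and>
     group_hom (obT G) (omul G) (amul G) (idn G) \<and>
     group_hom (arT G) (amul G) (amul G) (inv G) \<and>
     (\<forall>(g, h) \<in> composable G. \<forall>(g', h') \<in> composable G.
        cmp G (amul G g g') (amul G h h') = amul G (cmp G g h) (cmp G g' h'))"

definition kerS :: "('o, 'a, 'm) twogrp_scheme \<Rightarrow> 'a set" where
  "kerS G = {e \<in> topspace (arT G). src G e = oone G}"

definition conj_act :: "('o, 'a, 'm) twogrp_scheme \<Rightarrow> 'o \<Rightarrow> 'a \<Rightarrow> 'a" where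
  "conj_act G x e = amul G (amul G (idn G x) e) (idn G (oinv G x))"

section \<open>G-2-spaces, G-functors, G-equivalences\<close>

record ('o, 'a, 'g0, 'g1) g2space = "('o, 'a) gpd" +
  actO :: "'o \<Rightarrow> 'g0 \<Rightarrow> 'o"
  actA :: "'a \<Rightarrow> 'g1 \<Rightarrow> 'a"

definition G_2space :: "('g0, 'g1, 'm) twogrp_scheme \<Rightarrow> ('o, 'a, 'g0, 'g1, 'n) g2space_scheme \<Rightarrow> bool" where
  "G_2space G P \<longleftrightarrow>
     topological_2space P \<and>
     continuous_map (prod_topology (obT P) (obT G)) (obT P) (\<lambda>(p, x). actO P p x) \<and>
     continuous_map (prod_topology (arT P) (arT G)) (arT P) (\<lambda>(a, g). actA P a g) \<and>
     (\<forall>a \<in> topspace (arT P). \<forall>g \<in> topspace (arT G).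
        src P (actA P a g) = actO P (src P a) (src G g) \<and>
        tgt P (actA P a g) = actO P (tgt P a) (tgt G g)) \<and>
     (\<forall>p \<in> topspace (obT P). \<forall>x \<in> topspace (obT G).
        actA P (idn P p) (idn G x) = idn P (actO P p x)) \<and>
     (\<forall>(a, b) \<in> composable P. \<forall>(g, h) \<in> composable G.
        actA P (cmp P a b) (cmp G g h) = cmp P (actA P a g) (actA P b h)) \<and>
     (\<forall>p \<in> topspace (obT P). actO P p (oone G) = p \<and>
        (\<forall>x \<in> topspace (obT G). \<forall>y \<in> topspace (obT G).
           actO P (actO P p x) y = actO P p (omul G x y))) \<and>
     (\<forall>a \<in> topspace (arT P). actA P a (aone G) = a \<and>
        (\<forall>g \<in> topspace (arT G). \<forall>h \<in> topspace (arT G).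
           actA P (actA P a g) h = actA P a (amul G g h)))"

definition G_functor :: "('g0, 'g1, 'm) twogrp_scheme \<Rightarrow> ('o, 'a, 'g0, 'g1, 'n) g2space_scheme \<Rightarrow>
    ('p, 'b, 'g0, 'g1, 'k) g2space_scheme \<Rightarrow> ('o \<Rightarrow> 'p) \<Rightarrow> ('a \<Rightarrow> 'b) \<Rightarrow> bool" where
  "G_functor G P Q F0 F1 \<longleftrightarrow>
     cont_functor P Q F0 F1 \<and>
     (\<forall>p \<in> topspace (obT P). \<forall>x \<in> topspace (obT G). F0 (actO P p x) = actO Q (F0 p) x) \<and>
     (\<forall>a \<in> topspace (arT P). \<forall>g \<in> topspace (arT G). F1 (actA P a g) = actA Q (F1 a) g)"

definition G0_nat_iso :: "('g0, 'g1, 'm) twogrp_scheme \<Rightarrow> ('o, 'a, 'g0, 'g1, 'n) g2space_scheme \<Rightarrow>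
    ('p, 'b, 'g0, 'g1, 'k) g2space_scheme \<Rightarrow>
    ('o \<Rightarrow> 'p) \<Rightarrow> ('a \<Rightarrow> 'b) \<Rightarrow> ('o \<Rightarrow> 'p) \<Rightarrow> ('a \<Rightarrow> 'b) \<Rightarrow> ('o \<Rightarrow> 'b) \<Rightarrow> bool" where
  "G0_nat_iso G P Q F0 F1 H0 H1 \<alpha> \<longleftrightarrow>
     cont_nat_trans P Q F0 F1 H0 H1 \<alpha> \<and>
     (\<forall>p \<in> topspace (obT P). \<forall>x \<in> topspace (obT G). \<alpha> (actO P p x) = actA Q (\<alpha> p) (idn G x))"

definition G_pseudo_inverse :: "('g0, 'g1, 'm) twogrp_scheme \<Rightarrow> ('o, 'a, 'g0, 'g1, 'n) g2space_scheme \<Rightarrow>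
    ('p, 'b, 'g0, 'g1, 'k) g2space_scheme \<Rightarrow> ('o \<Rightarrow> 'p) \<Rightarrow> ('a \<Rightarrow> 'b) \<Rightarrow>
    ('p \<Rightarrow> 'o) \<Rightarrow> ('b \<Rightarrow> 'a) \<Rightarrow> bool" where
  "G_pseudo_inverse G P Q f0 f1 g0 g1 \<longleftrightarrow>
     G_functor G Q P g0 g1 \<and>
     (\<exists>\<alpha>. G0_nat_iso G P P (g0 \<circ> f0) (g1 \<circ> f1) id id \<alpha>) \<and>
     (\<exists>\<beta>. G0_nat_iso G Q Q id id (f0 \<circ> g0) (f1 \<circ> g1) \<beta>)"

definition G_equivalence :: "('g0, 'g1, 'm) twogrp_scheme \<Rightarrow> ('o, 'a, 'g0, 'g1, 'n) g2space_scheme \<Rightarrow>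
    ('p, 'b, 'g0, 'g1, 'k) g2space_scheme \<Rightarrow> ('o \<Rightarrow> 'p) \<Rightarrow> ('a \<Rightarrow> 'b) \<Rightarrow> bool" where
  "G_equivalence G P Q f0 f1 \<longleftrightarrow>
     G_functor G P Q f0 f1 \<and>
     (\<exists>(g0 :: 'p \<Rightarrow> 'o) (g1 :: 'b \<Rightarrow> 'a). G_pseudo_inverse G P Q f0 f1 g0 g1)"

section \<open>Principal G-bundles\<close>

definition restr :: "('o, 'a, 'g0, 'g1, 'n) g2space_scheme \<Rightarrow> ('o \<Rightarrow> 'x) \<Rightarrow> 'x set \<Rightarrow>
    ('o, 'a, 'g0, 'g1, 'n) g2space_scheme" where
  "restr P \<pi>0 U = P\<lparr>obT := subtopology (obT P) {p. \<pi>0 p \<in> U},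
                    arT := subtopology (arT P) {a. \<pi>0 (src P a) \<in> U \<and> \<pi>0 (tgt P a) \<in> U}\<rparr>"

definition triv :: "'x topology \<Rightarrow> 'x set \<Rightarrow> ('g0, 'g1, 'm) twogrp_scheme \<Rightarrow>
    ('x \<times> 'g0, 'x \<times> 'g1, 'g0, 'g1) g2space" where
  "triv X U G = \<lparr>obT = prod_topology (subtopology X U) (obT G),
                arT = prod_topology (subtopology X U) (arT G),
                src = (\<lambda>(u, g). (u, src G g)),
                tgt = (\<lambda>(u, g). (u, tgt G g)),
                cmp = (\<lambda>(u, g) (v, h). (u, cmp G g h)),
                idn = (\<lambda>(u, x). (u, idn G x)),
                inv = (\<lambda>(u, g). (u, inv G g)),
                actO = (\<lambda>(u, x) y. (u, omul G x y)),
                actA = (\<lambda>(u, g) h. (u, amul G g h))\<rparr>"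

definition trivializing_chart :: "('g0, 'g1, 'm) twogrp_scheme \<Rightarrow> 'x topology \<Rightarrow>
    ('o, 'a, 'g0, 'g1, 'n) g2space_scheme \<Rightarrow> ('o \<Rightarrow> 'x) \<Rightarrow> ('a \<Rightarrow> 'x) \<Rightarrow> 'x set \<Rightarrow>
    ('o \<Rightarrow> 'x \<times> 'g0) \<Rightarrow> ('a \<Rightarrow> 'x \<times> 'g1) \<Rightarrow> ('x \<times> 'g0 \<Rightarrow> 'o) \<Rightarrow> ('x \<times> 'g1 \<Rightarrow> 'a) \<Rightarrow>
    ('o \<Rightarrow> 'a) \<Rightarrow> bool" where
  "trivializing_chart G X P \<pi>0 \<pi>1 U \<psi>0 \<psi>1 \<phi>0 \<phi>1 \<epsilon> \<longleftrightarrow>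
     openin X U \<and>
     G_equivalence G (restr P \<pi>0 U) (triv X U G) \<psi>0 \<psi>1 \<and>
     G_pseudo_inverse G (restr P \<pi>0 U) (triv X U G) \<psi>0 \<psi>1 \<phi>0 \<phi>1 \<and>
     G0_nat_iso G (restr P \<pi>0 U) (restr P \<pi>0 U) (\<phi>0 \<circ> \<psi>0) (\<phi>1 \<circ> \<psi>1) id id \<epsilon> \<and>
     (\<forall>p \<in> topspace (obT (restr P \<pi>0 U)). fst (\<psi>0 p) = \<pi>0 p) \<and>
     (\<forall>a \<in> topspace (arT (restr P \<pi>0 U)). fst (\<psi>1 a) = \<pi>1 a) \<and>
     (\<forall>q \<in> topspace (obT (triv X U G)). \<pi>0 (\<phi>0 q) = fst q) \<and>
     (\<forall>b \<in> topspace (arT (triv X U G)). \<pi>1 (\<phi>1 b) = fst b)"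

definition trivializing_cover :: "('g0, 'g1, 'm) twogrp_scheme \<Rightarrow> 'x topology \<Rightarrow>
    ('o, 'a, 'g0, 'g1, 'n) g2space_scheme \<Rightarrow> ('o \<Rightarrow> 'x) \<Rightarrow> ('a \<Rightarrow> 'x) \<Rightarrow> 'x set set \<Rightarrow> bool" where
  "trivializing_cover G X P \<pi>0 \<pi>1 \<V> \<longleftrightarrow>
     \<Union>\<V> = topspace X \<and>
     (\<forall>V \<in> \<V>. \<exists>\<psi>0 \<psi>1 \<phi>0 \<phi>1 \<epsilon>. trivializing_chart G X P \<pi>0 \<pi>1 V \<psi>0 \<psi>1 \<phi>0 \<phi>1 \<epsilon>)"

definition principal_bundle :: "('g0, 'g1, 'm) twogrp_scheme \<Rightarrow> 'x topology \<Rightarrow>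
    ('o, 'a, 'g0, 'g1, 'n) g2space_scheme \<Rightarrow> ('o \<Rightarrow> 'x) \<Rightarrow> ('a \<Rightarrow> 'x) \<Rightarrow> bool" where
  "principal_bundle G X P \<pi>0 \<pi>1 \<longleftrightarrow>
     G_2space G P \<and> cont_functor P (disc X) \<pi>0 \<pi>1 \<and>
     (\<exists>\<V>. trivializing_cover G X P \<pi>0 \<pi>1 \<V>)"

section \<open>Cech cocycles and the 2-space P_c\<close>

definition cech_cocycle :: "('g0, 'g1, 'm) twogrp_scheme \<Rightarrow> 'x topology \<Rightarrow> 'i set \<Rightarrow> ('i \<Rightarrow> 'x set) \<Rightarrow>
    ('i \<Rightarrow> 'i \<Rightarrow> 'x \<Rightarrow> 'g0) \<Rightarrow> ('i \<Rightarrow> 'i \<Rightarrow> 'i \<Rightarrow> 'x \<Rightarrow> 'g1) \<Rightarrow> bool" where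
  "cech_cocycle G X I U xx ee \<longleftrightarrow>
     (\<forall>i \<in> I. \<forall>j \<in> I. continuous_map (subtopology X (U i \<inter> U j)) (obT G) (xx i j)) \<and>
     (\<forall>i \<in> I. \<forall>j \<in> I. \<forall>k \<in> I.
        continuous_map (subtopology X (U i \<inter> U j \<inter> U k)) (subtopology (arT G) (kerS G)) (ee i j k)) \<and>
     (\<forall>i \<in> I. \<forall>j \<in> I. \<forall>k \<in> I. \<forall>v \<in> topspace X \<inter> U i \<inter> U j \<inter> U k.
        omul G (omul G (tgt G (ee i j k v)) (xx i j v)) (xx j k v) = xx i k v) \<and>
     (\<forall>i \<in> I. \<forall>j \<in> I. \<forall>k \<in> I. \<forall>l \<in> I. \<forall>v \<in> topspace X \<inter> U i \<inter> U j \<inter> U k \<inter> U l.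
        amul G (ee i k l v) (ee i j k v) = amul G (ee i j l v) (conj_act G (xx i j v) (ee j k l v)))"

definition Pc :: "('g0, 'g1, 'm) twogrp_scheme \<Rightarrow> 'x topology \<Rightarrow> 'i set \<Rightarrow> ('i \<Rightarrow> 'x set) \<Rightarrow>
    ('i \<Rightarrow> 'i \<Rightarrow> 'x \<Rightarrow> 'g0) \<Rightarrow> ('i \<Rightarrow> 'i \<Rightarrow> 'i \<Rightarrow> 'x \<Rightarrow> 'g1) \<Rightarrow>
    ('i \<times> 'x \<times> 'g0, ('i \<times> 'i) \<times> 'x \<times> 'g1, 'g0, 'g1) g2space" where
  "Pc G X I U xx ee = \<lparr>
     obT = sum_topology (\<lambda>i. prod_topology (subtopology X (U i)) (obT G)) I,
     arT = sum_topology (\<lambda>(i, j). prod_topology (subtopology X (U i \<inter> U j)) (arT G)) (I \<times> I),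
     src = (\<lambda>((i, j), (v, g)). (i, (v, src G g))),
     tgt = (\<lambda>((i, j), (v, g)). (j, (v, omul G (oinv G (xx i j v)) (tgt G g)))),
     cmp = (\<lambda>((i, j), (v, g)) ((j', k), (v', h)).
              ((i, k), (v, amul G (ee i j k v) (cmp G g (amul G (idn G (xx i j v)) h))))),
     idn = (\<lambda>(i, (u, x)). ((i, i), (u, amul G (ainv G (ee i i i u)) (idn G x)))),
     inv = (\<lambda>((i, j), (v, g)). ((j, i), (v,
              amul G (amul G (amul G (idn G (oinv G (xx i j v))) (ainv G (ee i j i v)))
                              (ainv G (ee i i i v))) (inv G g)))),
     actO = (\<lambda>(i, (u, x)) y. (i, (u, omul G x y))),
     actA = (\<lambda>((i, j), (v, g)) h. ((i, j), (v, amul G g h)))\<rparr>"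

definition \<pi>c0 :: "'i \<times> 'x \<times> 'g0 \<Rightarrow> 'x" where
  "\<pi>c0 = (\<lambda>(i, (u, x)). u)"

definition \<pi>c1 :: "('i \<times> 'i) \<times> 'x \<times> 'g1 \<Rightarrow> 'x" where
  "\<pi>c1 = (\<lambda>((i, j), (v, g)). v)"

end

theory Submission
  imports Defs
begin


lemma cm_mem: "continuous_map X Y f \<Longrightarrow> x \<in> topspace X \<Longrightarrow> f x \<in> topspace Y"
  using continuous_map_image_subset_topspace by fastforce

lemma continuous_map_local:
  assumes "\<And>z. z \<in> topspace Z \<Longrightarrow> \<exists>N. openin Z N \<and> z \<in> N \<and> continuous_map (subtopology Z N) Y f"
  shows "continuous_map Z Y f"
  unfolding continuous_map_def
proof (intro conjI allI impI)
  show "f \<in> topspace Z \<rightarrow> topspace Y"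
  proof
    fix z assume z: "z \<in> topspace Z"
    then obtain N where N: "openin Z N" "z \<in> N" "continuous_map (subtopology Z N) Y f" using assms by blast
    have "z \<in> topspace (subtopology Z N)" using z N by simp
    then show "f z \<in> topspace Y" by (rule cm_mem[OF N(3)])
  qed
  fix V assume V: "openin Y V"
  show "openin Z {x \<in> topspace Z. f x \<in> V}"
  proof (subst openin_subopen, intro ballI)
    fix z assume "z \<in> {x \<in> topspace Z. f x \<in> V}"
    then have z: "z \<in> topspace Z" "f z \<in> V" by auto
    then obtain N where N: "openin Z N" "z \<in> N" "continuous_map (subtopology Z N) Y f" using assms by blast
    have "openin (subtopology Z N) {x \<in> topspace (subtopology Z N). f x \<in> V}"
      using N(3) V by (simp add: continuous_map_def)
    then have o: "openin Z {x \<in> topspace (subtopology Z N). f x \<in> V}"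
      using N(1) openin_trans_full by blast
    show "\<exists>T. openin Z T \<and> z \<in> T \<and> T \<subseteq> {x \<in> topspace Z. f x \<in> V}"
      by (rule exI[of _ "{x \<in> topspace (subtopology Z N). f x \<in> V}"]) (use o z N in auto)
  qed
qed

lemma continuous_map_from_sum:
  assumes "\<And>i. i \<in> I \<Longrightarrow> continuous_map (S i) Y (\<lambda>x. f (i, x))"
  shows "continuous_map (sum_topology S I) Y f"
  unfolding continuous_map_def
proof (intro conjI allI impI)
  show "f \<in> topspace (sum_topology S I) \<rightarrow> topspace Y"
    using assms cm_mem by fastforce
  fix V assume V: "openin Y V"
  have "openin (S i) {x. (i, x) \<in> {x \<in> topspace (sum_topology S I). f x \<in> V}}" if "i \<in> I" for i
  proof -
    have "{x. (i, x) \<in> {x \<in> topspace (sum_topology S I). f x \<in> V}} = {x \<in> topspace (S i). f (i,x) \<in> V}"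
      using that by auto
    then show ?thesis using assms[OF that] V by (simp add: continuous_map_def)
  qed
  then show "openin (sum_topology S I) {x \<in> topspace (sum_topology S I). f x \<in> V}"
    by (auto simp: openin_sum_topology)
qed

lemma openin_sum_slice:
  "openin (sum_topology S I) {p \<in> topspace (sum_topology S I). fst p = i}"
proof -
  have "{x. (j, x) \<in> {p \<in> topspace (sum_topology S I). fst p = i}} = (if j = i then topspace (S j) else {})"
    if "j \<in> I" for j using that by auto
  then show ?thesis by (auto simp: openin_sum_topology)
qed

lemma continuous_map_sum_snd:
  assumes "i \<in> I"
  shows "continuous_map (subtopology (sum_topology S I) {p. fst p = i}) (S i) snd"
  unfolding continuous_map_def
proof (intro conjI allI impI)
  show "snd \<in> topspace (subtopology (sum_topology S I) {p. fst p = i}) \<rightarrow> topspace (S i)"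
    by auto
  fix V assume V: "openin (S i) V"
  have e: "{x \<in> topspace (subtopology (sum_topology S I) {p. fst p = i}). snd x \<in> V}
      = Sigma I (\<lambda>j. if j = i then V else {}) \<inter> {p. fst p = i}"
    using openin_subset[OF V] assms by auto
  have "openin (sum_topology S I) (Sigma I (\<lambda>j. if j = i then V else {}))"
    using V by (simp add: openin_disjoint_union)
  then show "openin (subtopology (sum_topology S I) {p. fst p = i})
        {x \<in> topspace (subtopology (sum_topology S I) {p. fst p = i}). snd x \<in> V}"
    unfolding e by (auto simp: openin_subtopology)
qed

lemma continuous_map_into_sum:
  assumes "i \<in> I" "continuous_map Z (S i) f"
  shows "continuous_map Z (sum_topology S I) (\<lambda>z. (i, f z))"
  using continuous_map_compose[OF assms(2) continuous_map_component_injection[of i I S, OF assms(1)]]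
  by (simp add: o_def)




lemma tgrp_closure:
  assumes "topological_group T m i e"
  shows "e \<in> topspace T" "\<And>x y. x \<in> topspace T \<Longrightarrow> y \<in> topspace T \<Longrightarrow> m x y \<in> topspace T"
    "\<And>x. x \<in> topspace T \<Longrightarrow> i x \<in> topspace T"
proof -
  show "e \<in> topspace T" using assms by (simp add: topological_group_def)
  fix x y assume "x \<in> topspace T" "y \<in> topspace T"
  then show "m x y \<in> topspace T"
    using cm_mem[of "prod_topology T T" T "\<lambda>(x, y). m x y" "(x,y)"] assms
    by (simp add: topological_group_def)
next
  fix x assume "x \<in> topspace T"
  then show "i x \<in> topspace T" using cm_mem assms by (metis topological_group_def)
qed

lemma tgrp_hom:
  assumes G: "topological_group T m i e" and H: "topological_group T' m' i' e'"
    and h: "group_hom T m m' f" and f: "\<And>x. x \<in> topspace T \<Longrightarrow> f x \<in> topspace T'"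
  shows "f e = e'" "\<And>x. x \<in> topspace T \<Longrightarrow> f (i x) = i' (f x)"
proof -
  note cG = tgrp_closure[OF G] and cH = tgrp_closure[OF H]
  have ax: "\<forall>x \<in> topspace T'. m' e' x = x \<and> m' x e' = x \<and> m' (i' x) x = e' \<and> m' x (i' x) = e'"
    "\<forall>x \<in> topspace T'. \<forall>y \<in> topspace T'. \<forall>z \<in> topspace T'. m' (m' x y) z = m' x (m' y z)"
    using H by (auto simp: topological_group_def)
  have axG: "\<forall>x \<in> topspace T. m e x = x \<and> m x e = x \<and> m (i x) x = e \<and> m x (i x) = e"
    using G by (auto simp: topological_group_def)
  have fe: "f e \<in> topspace T'" using f cG(1) by blast
  have "f e = m' (f e) (f e)" using h cG(1) axG by (metis group_hom_def)
  then have "m' (i' (f e)) (f e) = m' (i' (f e)) (m' (f e) (f e))" by simp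
  then show fe1: "f e = e'" using ax fe cH by metis
  fix x assume x: "x \<in> topspace T"
  have fx: "f x \<in> topspace T'" "f (i x) \<in> topspace T'" using f x cG by auto
  have "m' (f (i x)) (f x) = e'" using h x cG axG fe1 by (metis group_hom_def)
  then have "m' (m' (f (i x)) (f x)) (i' (f x)) = m' e' (i' (f x))" by simp
  then show "f (i x) = i' (f x)" using ax fx cH by metis
qed

locale tg =
  fixes G :: "('g0, 'g1, 'm) twogrp_scheme"
  assumes TG: "topological_2group G"
begin

abbreviation "GA \<equiv> topspace (arT G)"
abbreviation "GO \<equiv> topspace (obT G)"

lemma TS: "topological_2space G" using TG by (simp add: topological_2group_def)
lemma TO: "topological_group (obT G) (omul G) (oinv G) (oone G)" using TG by (simp add: topological_2group_def)
lemma TA: "topological_group (arT G) (amul G) (ainv G) (aone G)" using TG by (simp add: topological_2group_def)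

lemma cont_src: "continuous_map (arT G) (obT G) (src G)" using TS by (simp add: topological_2space_def)
lemma cont_tgt: "continuous_map (arT G) (obT G) (tgt G)" using TS by (simp add: topological_2space_def)
lemma cont_idn: "continuous_map (obT G) (arT G) (idn G)" using TS by (simp add: topological_2space_def)
lemma cont_inv: "continuous_map (arT G) (arT G) (inv G)" using TS by (simp add: topological_2space_def)
lemma cont_cmp: "continuous_map (subtopology (prod_topology (arT G) (arT G)) (composable G)) (arT G)
        (\<lambda>(g, h). cmp G g h)" using TS by (simp add: topological_2space_def)
lemma cont_amul: "continuous_map (prod_topology (arT G) (arT G)) (arT G) (\<lambda>(x, y). amul G x y)"
  using TA by (simp add: topological_group_def)
lemma cont_ainv: "continuous_map (arT G) (arT G) (ainv G)"
  using TA by (simp add: topological_group_def)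
lemma cont_omul: "continuous_map (prod_topology (obT G) (obT G)) (obT G) (\<lambda>(x, y). omul G x y)"
  using TO by (simp add: topological_group_def)
lemma cont_oinv: "continuous_map (obT G) (obT G) (oinv G)"
  using TO by (simp add: topological_group_def)

lemma cl [simp]:
  "aone G \<in> GA" "oone G \<in> GO"
  "\<And>x y. x \<in> GA \<Longrightarrow> y \<in> GA \<Longrightarrow> amul G x y \<in> GA"
  "\<And>x y. x \<in> GO \<Longrightarrow> y \<in> GO \<Longrightarrow> omul G x y \<in> GO"
  "\<And>x. x \<in> GA \<Longrightarrow> ainv G x \<in> GA"
  "\<And>x. x \<in> GO \<Longrightarrow> oinv G x \<in> GO"
  "\<And>x. x \<in> GA \<Longrightarrow> src G x \<in> GO"
  "\<And>x. x \<in> GA \<Longrightarrow> tgt G x \<in> GO"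
  "\<And>x. x \<in> GA \<Longrightarrow> inv G x \<in> GA"
  "\<And>x. x \<in> GO \<Longrightarrow> idn G x \<in> GA"
  using tgrp_closure[OF TA] tgrp_closure[OF TO] cm_mem[OF cont_src] cm_mem[OF cont_tgt]
    cm_mem[OF cont_inv] cm_mem[OF cont_idn] by auto

lemma A_ax:
  "\<And>x y z. x \<in> GA \<Longrightarrow> y \<in> GA \<Longrightarrow> z \<in> GA \<Longrightarrow> amul G (amul G x y) z = amul G x (amul G y z)"
  "\<And>x. x \<in> GA \<Longrightarrow> amul G (aone G) x = x"
  "\<And>x. x \<in> GA \<Longrightarrow> amul G x (aone G) = x"
  "\<And>x. x \<in> GA \<Longrightarrow> amul G (ainv G x) x = aone G"
  "\<And>x. x \<in> GA \<Longrightarrow> amul G x (ainv G x) = aone G"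
  using TA by (auto simp: topological_group_def)

lemma O_ax:
  "\<And>x y z. x \<in> GO \<Longrightarrow> y \<in> GO \<Longrightarrow> z \<in> GO \<Longrightarrow> omul G (omul G x y) z = omul G x (omul G y z)"
  "\<And>x. x \<in> GO \<Longrightarrow> omul G (oone G) x = x"
  "\<And>x. x \<in> GO \<Longrightarrow> omul G x (oone G) = x"
  "\<And>x. x \<in> GO \<Longrightarrow> omul G (oinv G x) x = oone G"
  "\<And>x. x \<in> GO \<Longrightarrow> omul G x (oinv G x) = oone G"
  using TO by (auto simp: topological_group_def)

lemma A_more:
  "\<And>x y. x \<in> GA \<Longrightarrow> y \<in> GA \<Longrightarrow> amul G (ainv G x) (amul G x y) = y"
  "\<And>x y. x \<in> GA \<Longrightarrow> y \<in> GA \<Longrightarrow> amul G x (amul G (ainv G x) y) = y"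
  "\<And>x. x \<in> GA \<Longrightarrow> ainv G (ainv G x) = x"
  "\<And>x y. x \<in> GA \<Longrightarrow> y \<in> GA \<Longrightarrow> ainv G (amul G x y) = amul G (ainv G y) (ainv G x)"
  "ainv G (aone G) = aone G"
proof -
  show 1: "\<And>x y. x \<in> GA \<Longrightarrow> y \<in> GA \<Longrightarrow> amul G (ainv G x) (amul G x y) = y"
    by (metis A_ax cl)
  show 2: "\<And>x y. x \<in> GA \<Longrightarrow> y \<in> GA \<Longrightarrow> amul G x (amul G (ainv G x) y) = y"
    by (metis A_ax cl)
  show 3: "\<And>x. x \<in> GA \<Longrightarrow> ainv G (ainv G x) = x"
    by (metis A_ax cl)
  show "\<And>x y. x \<in> GA \<Longrightarrow> y \<in> GA \<Longrightarrow> ainv G (amul G x y) = amul G (ainv G y) (ainv G x)"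
  proof -
    fix x y assume xy: "x \<in> GA" "y \<in> GA"
    have "amul G (amul G x y) (amul G (ainv G y) (ainv G x)) = aone G"
      using xy by (simp add: A_ax 2)
    then have "amul G (ainv G (amul G x y)) (amul G (amul G x y) (amul G (ainv G y) (ainv G x))) = ainv G (amul G x y)"
      using xy by (simp add: A_ax)
    then show "ainv G (amul G x y) = amul G (ainv G y) (ainv G x)" using xy 1 by simp
  qed
  show "ainv G (aone G) = aone G" by (metis A_ax cl)
qed

lemma O_more:
  "\<And>x y. x \<in> GO \<Longrightarrow> y \<in> GO \<Longrightarrow> omul G (oinv G x) (omul G x y) = y"
  "\<And>x y. x \<in> GO \<Longrightarrow> y \<in> GO \<Longrightarrow> omul G x (omul G (oinv G x) y) = y"
  "\<And>x. x \<in> GO \<Longrightarrow> oinv G (oinv G x) = x"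
  "\<And>x y. x \<in> GO \<Longrightarrow> y \<in> GO \<Longrightarrow> oinv G (omul G x y) = omul G (oinv G y) (oinv G x)"
  "oinv G (oone G) = oone G"
proof -
  show 1: "\<And>x y. x \<in> GO \<Longrightarrow> y \<in> GO \<Longrightarrow> omul G (oinv G x) (omul G x y) = y"
    by (metis O_ax cl)
  show 2: "\<And>x y. x \<in> GO \<Longrightarrow> y \<in> GO \<Longrightarrow> omul G x (omul G (oinv G x) y) = y"
    by (metis O_ax cl)
  show 3: "\<And>x. x \<in> GO \<Longrightarrow> oinv G (oinv G x) = x"
    by (metis O_ax cl)
  show "\<And>x y. x \<in> GO \<Longrightarrow> y \<in> GO \<Longrightarrow> oinv G (omul G x y) = omul G (oinv G y) (oinv G x)"
  proof -
    fix x y assume xy: "x \<in> GO" "y \<in> GO"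
    have "omul G (omul G x y) (omul G (oinv G y) (oinv G x)) = oone G"
      using xy by (simp add: O_ax 2)
    then have "omul G (oinv G (omul G x y)) (omul G (omul G x y) (omul G (oinv G y) (oinv G x))) = oinv G (omul G x y)"
      using xy by (simp add: O_ax)
    then show "oinv G (omul G x y) = omul G (oinv G y) (oinv G x)" using xy 1 by simp
  qed
  show "oinv G (oone G) = oone G" by (metis O_ax cl)
qed

lemma homs:
  "\<And>x y. x \<in> GA \<Longrightarrow> y \<in> GA \<Longrightarrow> src G (amul G x y) = omul G (src G x) (src G y)"
  "\<And>x y. x \<in> GA \<Longrightarrow> y \<in> GA \<Longrightarrow> tgt G (amul G x y) = omul G (tgt G x) (tgt G y)"
  "\<And>x y. x \<in> GO \<Longrightarrow> y \<in> GO \<Longrightarrow> idn G (omul G x y) = amul G (idn G x) (idn G y)"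
  using TG by (auto simp: topological_2group_def group_hom_def)

lemma hom_src: "src G (aone G) = oone G" "\<And>x. x \<in> GA \<Longrightarrow> src G (ainv G x) = oinv G (src G x)"
  using tgrp_hom[OF TA TO _ cl(7)] TG by (auto simp: topological_2group_def)
lemma hom_tgt: "tgt G (aone G) = oone G" "\<And>x. x \<in> GA \<Longrightarrow> tgt G (ainv G x) = oinv G (tgt G x)"
  using tgrp_hom[OF TA TO _ cl(8)] TG by (auto simp: topological_2group_def)
lemma hom_idn: "idn G (oone G) = aone G" "\<And>x. x \<in> GO \<Longrightarrow> idn G (oinv G x) = ainv G (idn G x)"
  using tgrp_hom[OF TO TA _ cl(10)] TG by (auto simp: topological_2group_def)

lemma idn_st: "\<And>x. x \<in> GO \<Longrightarrow> src G (idn G x) = x" "\<And>x. x \<in> GO \<Longrightarrow> tgt G (idn G x) = x"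
  using TS by (auto simp: topological_2space_def)

lemma gpd_ax:
  "\<And>g. g \<in> GA \<Longrightarrow> cmp G (idn G (src G g)) g = g"
  "\<And>g. g \<in> GA \<Longrightarrow> cmp G g (idn G (tgt G g)) = g"
  "\<And>g. g \<in> GA \<Longrightarrow> src G (inv G g) = tgt G g \<and> tgt G (inv G g) = src G g \<and>
         cmp G g (inv G g) = idn G (src G g) \<and> cmp G (inv G g) g = idn G (tgt G g)"
  using TS by (auto simp: topological_2space_def)

lemma interchange:
  "\<And>g h g' h'. g \<in> GA \<Longrightarrow> h \<in> GA \<Longrightarrow> g' \<in> GA \<Longrightarrow> h' \<in> GA \<Longrightarrow> tgt G g = src G h \<Longrightarrow> tgt G g' = src G h' \<Longrightarrow>
     cmp G (amul G g g') (amul G h h') = amul G (cmp G g h) (cmp G g' h')"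
  using TG unfolding topological_2group_def composable_def by fast

lemmas gs [simp] = A_ax A_more O_ax O_more homs hom_src hom_tgt hom_idn idn_st

lemma cmp_formula:
  assumes g: "g \<in> GA" and h: "h \<in> GA" and c: "tgt G g = src G h"
  shows "cmp G g h = amul G g (amul G (ainv G (idn G (tgt G g))) h)"
proof -
  have "cmp G (amul G g (aone G)) (amul G (idn G (tgt G g)) (amul G (ainv G (idn G (tgt G g))) h))
     = amul G (cmp G g (idn G (tgt G g))) (cmp G (aone G) (amul G (ainv G (idn G (tgt G g))) h))"
    by (rule interchange) (use g h c in auto)
  also have "cmp G (aone G) (amul G (ainv G (idn G (tgt G g))) h) = amul G (ainv G (idn G (tgt G g))) h"
    using gpd_ax(1)[of "amul G (ainv G (idn G (tgt G g))) h"] g h c by simp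
  finally show ?thesis using g h gpd_ax(2) by simp
qed

lemma cmp_formula2:
  assumes g: "g \<in> GA" and h: "h \<in> GA" and c: "tgt G g = src G h"
  shows "cmp G g h = amul G h (amul G (ainv G (idn G (tgt G g))) g)"
proof -
  have "cmp G (amul G (aone G) g) (amul G (amul G h (ainv G (idn G (tgt G g)))) (idn G (tgt G g)))
     = amul G (cmp G (aone G) (amul G h (ainv G (idn G (tgt G g))))) (cmp G g (idn G (tgt G g)))"
    by (rule interchange) (use g h c in auto)
  also have "cmp G (aone G) (amul G h (ainv G (idn G (tgt G g)))) = amul G h (ainv G (idn G (tgt G g)))"
    using gpd_ax(1)[of "amul G h (ainv G (idn G (tgt G g)))"] g h c by simp
  finally show ?thesis using g h gpd_ax(2) by simp
qed

lemma GP: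
  assumes w: "w \<in> GA" and e: "e \<in> GA" and se: "src G e = oone G"
  shows "amul G w e = amul G (idn G (tgt G w)) (amul G e (amul G (ainv G (idn G (tgt G w))) w))"
proof -
  have c: "tgt G w = src G (amul G (idn G (tgt G w)) e)" using w e se by simp
  have "cmp G w (amul G (idn G (tgt G w)) e) = amul G w e"
    using cmp_formula[OF w _ c] w e by simp
  moreover have "cmp G w (amul G (idn G (tgt G w)) e) = amul G (idn G (tgt G w)) (amul G e (amul G (ainv G (idn G (tgt G w))) w))"
    using cmp_formula2[OF w _ c] w e by simp
  ultimately show ?thesis by simp
qed

lemma inv_formula:
  assumes g: "g \<in> GA"
  shows "inv G g = amul G (idn G (tgt G g)) (amul G (ainv G g) (idn G (src G g)))"
proof -
  have "cmp G g (inv G g) = idn G (src G g)" "src G (inv G g) = tgt G g" using gpd_ax(3) g by auto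
  then have "amul G g (amul G (ainv G (idn G (tgt G g))) (inv G g)) = idn G (src G g)"
    using cmp_formula[OF g cl(9)[OF g]] by simp
  then have "amul G (ainv G g) (amul G g (amul G (ainv G (idn G (tgt G g))) (inv G g))) = amul G (ainv G g) (idn G (src G g))"
    by simp
  then have "amul G (ainv G (idn G (tgt G g))) (inv G g) = amul G (ainv G g) (idn G (src G g))"
    using g by simp
  then have "amul G (idn G (tgt G g)) (amul G (ainv G (idn G (tgt G g))) (inv G g)) = amul G (idn G (tgt G g)) (amul G (ainv G g) (idn G (src G g)))"
    by simp
  then show ?thesis using g by simp
qed

end



context tg begin
lemma lcancel [simp]: "a \<in> GA \<Longrightarrow> b \<in> GA \<Longrightarrow> c \<in> GA \<Longrightarrow> (amul G a b = amul G a c) = (b = c)"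
  by (metis A_more(1))
lemma lcancelO [simp]: "a \<in> GO \<Longrightarrow> b \<in> GO \<Longrightarrow> c \<in> GO \<Longrightarrow> (omul G a b = omul G a c) = (b = c)"
  by (metis O_more(1))
lemma rcancel: "a \<in> GA \<Longrightarrow> b \<in> GA \<Longrightarrow> c \<in> GA \<Longrightarrow> amul G b a = amul G c a \<Longrightarrow> b = c"
  by (metis A_ax(1,3,5) cl(5))
lemma rcancelO: "a \<in> GO \<Longrightarrow> b \<in> GO \<Longrightarrow> c \<in> GO \<Longrightarrow> omul G b a = omul G c a \<Longrightarrow> b = c"
  by (metis O_ax(1,3,5) cl(6))
lemma conj_simp [simp]: "x \<in> GO \<Longrightarrow> e \<in> GA \<Longrightarrow> conj_act G x e = amul G (idn G x) (amul G e (ainv G (idn G x)))"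
  by (simp add: conj_act_def)
end

locale cc = tg G for G :: "('g0, 'g1, 'm) twogrp_scheme" +
  fixes X :: "'x topology" and I :: "'i set" and U :: "'i \<Rightarrow> 'x set"
    and xx :: "'i \<Rightarrow> 'i \<Rightarrow> 'x \<Rightarrow> 'g0" and ee :: "'i \<Rightarrow> 'i \<Rightarrow> 'i \<Rightarrow> 'x \<Rightarrow> 'g1"
  assumes opn: "\<forall>i \<in> I. openin X (U i)"
    and cov: "(\<Union>i \<in> I. U i) = topspace X"
    and coc: "cech_cocycle G X I U xx ee"
begin

lemma cont_xx: "i \<in> I \<Longrightarrow> j \<in> I \<Longrightarrow> continuous_map (subtopology X (U i \<inter> U j)) (obT G) (xx i j)"
  using coc by (simp add: cech_cocycle_def)
lemma cont_ee: "i \<in> I \<Longrightarrow> j \<in> I \<Longrightarrow> k \<in> I \<Longrightarrow>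
   continuous_map (subtopology X (U i \<inter> U j \<inter> U k)) (subtopology (arT G) (kerS G)) (ee i j k)"
  using coc by (simp add: cech_cocycle_def)

lemma xx_cl [simp]: "i \<in> I \<Longrightarrow> j \<in> I \<Longrightarrow> v \<in> topspace X \<Longrightarrow> v \<in> U i \<Longrightarrow> v \<in> U j \<Longrightarrow> xx i j v \<in> GO"
  using cm_mem[OF cont_xx, of i j v] by simp
lemma ee_cl: "i \<in> I \<Longrightarrow> j \<in> I \<Longrightarrow> k \<in> I \<Longrightarrow> v \<in> topspace X \<Longrightarrow> v \<in> U i \<Longrightarrow> v \<in> U j \<Longrightarrow> v \<in> U k \<Longrightarrow>
   ee i j k v \<in> GA \<and> src G (ee i j k v) = oone G"
  using cm_mem[OF cont_ee, of i j k v] by (simp add: kerS_def)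
lemma ee_A [simp]: "i \<in> I \<Longrightarrow> j \<in> I \<Longrightarrow> k \<in> I \<Longrightarrow> v \<in> topspace X \<Longrightarrow> v \<in> U i \<Longrightarrow> v \<in> U j \<Longrightarrow> v \<in> U k \<Longrightarrow>
   ee i j k v \<in> GA"
  using ee_cl by blast
lemma ee_s [simp]: "i \<in> I \<Longrightarrow> j \<in> I \<Longrightarrow> k \<in> I \<Longrightarrow> v \<in> topspace X \<Longrightarrow> v \<in> U i \<Longrightarrow> v \<in> U j \<Longrightarrow> v \<in> U k \<Longrightarrow>
   src G (ee i j k v) = oone G"
  using ee_cl by blast

lemma C1: "i \<in> I \<Longrightarrow> j \<in> I \<Longrightarrow> k \<in> I \<Longrightarrow> v \<in> topspace X \<Longrightarrow> v \<in> U i \<Longrightarrow> v \<in> U j \<Longrightarrow> v \<in> U k \<Longrightarrow>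
   omul G (omul G (tgt G (ee i j k v)) (xx i j v)) (xx j k v) = xx i k v"
  using coc unfolding cech_cocycle_def by blast
lemma C2: "i \<in> I \<Longrightarrow> j \<in> I \<Longrightarrow> k \<in> I \<Longrightarrow> l \<in> I \<Longrightarrow> v \<in> topspace X \<Longrightarrow> v \<in> U i \<Longrightarrow> v \<in> U j \<Longrightarrow> v \<in> U k \<Longrightarrow> v \<in> U l \<Longrightarrow>
   amul G (ee i k l v) (ee i j k v) = amul G (ee i j l v) (conj_act G (xx i j v) (ee j k l v))"
  using coc unfolding cech_cocycle_def by blast

lemma C1': 
  assumes "i \<in> I" "j \<in> I" "k \<in> I" "v \<in> topspace X" "v \<in> U i" "v \<in> U j" "v \<in> U k"
  shows "omul G (tgt G (ee i j k v)) (xx i j v) = omul G (xx i k v) (oinv G (xx j k v))"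
proof -
  have "omul G (omul G (omul G (tgt G (ee i j k v)) (xx i j v)) (xx j k v)) (oinv G (xx j k v))
     = omul G (xx i k v) (oinv G (xx j k v))" using C1[OF assms] by simp
  then show ?thesis using assms by simp
qed

lemma D1:
  assumes "i \<in> I" "v \<in> topspace X" "v \<in> U i"
  shows "xx i i v = oinv G (tgt G (ee i i i v))"
proof -
  have "omul G (tgt G (ee i i i v)) (xx i i v) = oone G"
    using C1'[of i i i v] assms by simp
  then have "omul G (oinv G (tgt G (ee i i i v))) (omul G (tgt G (ee i i i v)) (xx i i v)) = oinv G (tgt G (ee i i i v))"
    using assms by simp
  then show ?thesis using assms by simp
qed

lemma D2:
  assumes "i \<in> I" "j \<in> I" "v \<in> topspace X" "v \<in> U i" "v \<in> U j"
  shows "ee i i j v = ee i i i v"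
proof -
  let ?E = "ee i i i v" and ?F = "ee i i j v" and ?T = "idn G (tgt G (ee i i i v))"
  have "amul G ?F ?E = amul G ?F (conj_act G (xx i i v) ?F)" using C2[of i i i j v] assms by simp
  then have "?E = conj_act G (xx i i v) ?F" using assms by simp
  then have e: "?E = amul G (ainv G ?T) (amul G ?F ?T)" using assms by (simp add: D1)
  have "amul G ?T (amul G ?E (ainv G ?T)) = amul G ?T (amul G (amul G (ainv G ?T) (amul G ?F ?T)) (ainv G ?T))"
    using e by simp
  then have f: "?F = amul G ?T (amul G ?E (ainv G ?T))" using assms by simp
  have "amul G ?E ?E = amul G ?T (amul G ?E (amul G (ainv G ?T) ?E))"
    using GP[of ?E ?E] assms by simp
  then have "amul G (amul G ?E ?E) (ainv G ?E) = amul G (amul G ?T (amul G ?E (amul G (ainv G ?T) ?E))) (ainv G ?E)"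
    by simp
  then show ?thesis using f assms by simp
qed

lemma D3:
  assumes "i \<in> I" "j \<in> I" "v \<in> topspace X" "v \<in> U i" "v \<in> U j"
  shows "ee i j j v = amul G (idn G (xx i j v)) (amul G (ee j j j v) (ainv G (idn G (xx i j v))))"
proof -
  have "amul G (ee i j j v) (ee i j j v) = amul G (ee i j j v) (conj_act G (xx i j v) (ee j j j v))"
    using C2[of i j j j v] assms by simp
  then show ?thesis using assms by simp
qed

end



context cc begin

abbreviation "P \<equiv> Pc G X I U xx ee"

lemma P_simps [simp]:
  "src P ((i,j),(v,g)) = (i,(v, src G g))"
  "tgt P ((i,j),(v,g)) = (j,(v, omul G (oinv G (xx i j v)) (tgt G g)))"
  "idn P (i,(u,x)) = ((i,i),(u, amul G (ainv G (ee i i i u)) (idn G x)))"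
  "inv P ((i,j),(v,g)) = ((j,i),(v, amul G (amul G (amul G (idn G (oinv G (xx i j v))) (ainv G (ee i j i v)))
                              (ainv G (ee i i i v))) (inv G g)))"
  "actO P (i,(u,x)) y = (i,(u, omul G x y))"
  "actA P ((i,j),(v,g)) h = ((i,j),(v, amul G g h))"
  by (simp_all add: Pc_def)

lemma P_cmp_raw: "cmp P ((i,j),(v,g)) ((j',k),(v',h)) = ((i,k),(v, amul G (ee i j k v) (cmp G g (amul G (idn G (xx i j v)) h))))"
  by (simp add: Pc_def)

lemma P_top:
  "topspace (obT P) = Sigma I (\<lambda>i. (topspace X \<inter> U i) \<times> GO)"
  "topspace (arT P) = Sigma (I \<times> I) (\<lambda>(i,j). (topspace X \<inter> (U i \<inter> U j)) \<times> GA)"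
  by (auto simp: Pc_def)

lemma memO [simp]: "(i,(u,x)) \<in> topspace (obT P) \<longleftrightarrow> i \<in> I \<and> u \<in> topspace X \<and> u \<in> U i \<and> x \<in> GO"
  by (auto simp: P_top)
lemma memA [simp]: "((i,j),(v,g)) \<in> topspace (arT P) \<longleftrightarrow> i \<in> I \<and> j \<in> I \<and> v \<in> topspace X \<and> v \<in> U i \<and> v \<in> U j \<and> g \<in> GA"
  by (auto simp: P_top)

lemma C1'':
  assumes "i \<in> I" "j \<in> I" "k \<in> I" "v \<in> topspace X" "v \<in> U i" "v \<in> U j" "v \<in> U k" "r \<in> GO"
  shows "omul G (tgt G (ee i j k v)) (omul G (xx i j v) r) = omul G (xx i k v) (omul G (oinv G (xx j k v)) r)"
proof -
  have "omul G (omul G (tgt G (ee i j k v)) (xx i j v)) r = omul G (omul G (xx i k v) (oinv G (xx j k v))) r"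
    using C1'[OF assms(1-7)] by simp
  then show ?thesis using assms by simp
qed

lemma compP:
  "(a,b) \<in> composable P \<longleftrightarrow> (\<exists>i j k v g h. a = ((i,j),(v,g)) \<and> b = ((j,k),(v,h)) \<and> i \<in> I \<and> j \<in> I \<and> k \<in> I \<and>
     v \<in> topspace X \<and> v \<in> U i \<and> v \<in> U j \<and> v \<in> U k \<and> g \<in> GA \<and> h \<in> GA \<and>
     tgt G g = omul G (xx i j v) (src G h))"
proof
  assume "(a,b) \<in> composable P"
  then obtain i j v g j' k v' h where ab: "a = ((i,j),(v,g))" "b = ((j',k),(v',h))"
    and m: "a \<in> topspace (arT P)" "b \<in> topspace (arT P)" and c: "tgt P a = src P b"
    unfolding composable_def by (cases a, cases b) auto
  then have e: "j' = j" "v' = v" "src G h = omul G (oinv G (xx i j v)) (tgt G g)" by auto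
  have "tgt G g = omul G (xx i j v) (src G h)" using m ab e by simp
  then show "\<exists>i j k v g h. a = ((i,j),(v,g)) \<and> b = ((j,k),(v,h)) \<and> i \<in> I \<and> j \<in> I \<and> k \<in> I \<and>
     v \<in> topspace X \<and> v \<in> U i \<and> v \<in> U j \<and> v \<in> U k \<and> g \<in> GA \<and> h \<in> GA \<and>
     tgt G g = omul G (xx i j v) (src G h)" using ab m e by auto
next
  assume "\<exists>i j k v g h. a = ((i,j),(v,g)) \<and> b = ((j,k),(v,h)) \<and> i \<in> I \<and> j \<in> I \<and> k \<in> I \<and>
     v \<in> topspace X \<and> v \<in> U i \<and> v \<in> U j \<and> v \<in> U k \<and> g \<in> GA \<and> h \<in> GA \<and>
     tgt G g = omul G (xx i j v) (src G h)"
  then show "(a,b) \<in> composable P" by (auto simp: composable_def)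
qed

lemma Pcmp:
  assumes "i \<in> I" "j \<in> I" "k \<in> I" "v \<in> topspace X" "v \<in> U i" "v \<in> U j" "v \<in> U k" "g \<in> GA" "h \<in> GA"
    and c: "tgt G g = omul G (xx i j v) (src G h)"
  shows "cmp P ((i,j),(v,g)) ((j,k),(v,h)) =
     ((i,k),(v, amul G (ee i j k v) (amul G g (amul G (ainv G (idn G (src G h))) h))))"
  using assms by (simp add: P_cmp_raw cmp_formula c)

lemma Pcmp_mem:
  assumes "(a,b) \<in> composable P" shows "cmp P a b \<in> topspace (arT P)"
  using assms unfolding compP by (auto simp: Pcmp)

lemma S1: "(a,b) \<in> composable P \<Longrightarrow> src P (cmp P a b) = src P a \<and> tgt P (cmp P a b) = tgt P b"
  unfolding compP by (auto simp: Pcmp C1'')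


lemma S2:
  assumes ab: "(a,b) \<in> composable P" and cm: "c \<in> topspace (arT P)" and bc0: "tgt P b = src P c"
  shows "cmp P (cmp P a b) c = cmp P a (cmp P b c)"
proof -
  have bc: "(b,c) \<in> composable P" using ab cm bc0 by (auto simp: composable_def)
  obtain i j k v g h where a: "a = ((i,j),(v,g))" and b: "b = ((j,k),(v,h))" and
    m1: "i \<in> I" "j \<in> I" "k \<in> I" "v \<in> topspace X" "v \<in> U i" "v \<in> U j" "v \<in> U k" "g \<in> GA" "h \<in> GA"
    and tg: "tgt G g = omul G (xx i j v) (src G h)" using ab unfolding compP by blast
  obtain j' k' l v' h' m where b': "b = ((j',k'),(v',h'))" and c: "c = ((k',l),(v',m))" and
    m2: "l \<in> I" "v' \<in> U l" "m \<in> GA"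
    and th: "tgt G h' = omul G (xx j' k' v') (src G m)" using bc unfolding compP by blast
  have e: "j' = j" "k' = k" "v' = v" "h' = h" using b b' by auto
  note m2 = m2[unfolded e] and th = th[unfolded e] and c = c[unfolded e]
  let ?w = "amul G g (ainv G (idn G (src G h)))"
  have tw: "tgt G ?w = xx i j v" using m1 tg by simp
  have gp: "amul G ?w (ee j k l v) = amul G (idn G (xx i j v)) (amul G (ee j k l v) (amul G (ainv G (idn G (xx i j v))) ?w))"
    using GP[of ?w "ee j k l v"] m1 m2 tw by simp
  have c2: "amul G (ee i k l v) (ee i j k v) = amul G (ee i j l v) (conj_act G (xx i j v) (ee j k l v))"
    using C2[of i j k l v] m1 m2 by simp
  have key: "amul G (amul G (ee i k l v) (ee i j k v)) ?w = amul G (ee i j l v) (amul G ?w (ee j k l v))"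
    unfolding c2 gp using m1 m2 by simp
  have key2: "amul G (amul G (amul G (ee i k l v) (ee i j k v)) ?w) (amul G h (amul G (ainv G (idn G (src G m))) m))
     = amul G (amul G (ee i j l v) (amul G ?w (ee j k l v))) (amul G h (amul G (ainv G (idn G (src G m))) m))"
    using key by simp
  have t1: "tgt G (amul G (ee i j k v) (amul G g (amul G (ainv G (idn G (src G h))) h))) = omul G (xx i k v) (src G m)"
    using m1 m2 tg th by (simp add: C1'')
  show ?thesis unfolding a b c using m1 m2 tg th t1 key2 by (simp add: Pcmp)
qed

lemma S3: "x \<in> topspace (obT P) \<Longrightarrow> src P (idn P x) = x \<and> tgt P (idn P x) = x"
  by (cases x) (auto simp: D1)

lemma S4l: assumes "a \<in> topspace (arT P)" shows "cmp P (idn P (src P a)) a = a"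
proof -
  obtain i j v g where a: "a = ((i,j),(v,g))" and m: "i \<in> I" "j \<in> I" "v \<in> topspace X" "v \<in> U i" "v \<in> U j" "g \<in> GA"
    using assms by (cases a) auto
  have 1: "tgt G (amul G (ainv G (ee i i i v)) (idn G (src G g))) = omul G (xx i i v) (src G g)"
    using m by (simp add: D1)
  have 2: "cmp P ((i,i),(v,amul G (ainv G (ee i i i v)) (idn G (src G g)))) ((i,j),(v,g)) = 
    ((i,j),(v, amul G (ee i i j v) (amul G (amul G (ainv G (ee i i i v)) (idn G (src G g))) (amul G (ainv G (idn G (src G g))) g))))"
    by (rule Pcmp) (use m 1 in auto)
  show ?thesis unfolding a using m by (simp add: 2 D2[of i j v])
qed

lemma S4r: assumes "a \<in> topspace (arT P)" shows "cmp P a (idn P (tgt P a)) = a"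
proof -
  obtain i j v g where a: "a = ((i,j),(v,g))" and m: "i \<in> I" "j \<in> I" "v \<in> topspace X" "v \<in> U i" "v \<in> U j" "g \<in> GA"
    using assms by (cases a) auto
  let ?y = "omul G (oinv G (xx i j v)) (tgt G g)"
  let ?w = "amul G g (ainv G (idn G ?y))"
  have tw: "tgt G ?w = xx i j v" using m by simp
  have gp: "amul G ?w (ainv G (ee j j j v)) = amul G (idn G (xx i j v)) (amul G (ainv G (ee j j j v)) (amul G (ainv G (idn G (xx i j v))) ?w))"
    using GP[of ?w "ainv G (ee j j j v)"] m tw by simp
  have 1: "amul G (ee i j j v) (amul G (amul G ?w (ainv G (ee j j j v))) (idn G ?y)) = g"
    unfolding gp using m by (simp add: D3[of i j v])
  have 2: "cmp P ((i,j),(v,g)) ((j,j),(v, amul G (ainv G (ee j j j v)) (idn G ?y))) =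
     ((i,j),(v, amul G (ee i j j v) (amul G g (amul G (ainv G (idn G (src G (amul G (ainv G (ee j j j v)) (idn G ?y))))) (amul G (ainv G (ee j j j v)) (idn G ?y))))))"
    by (rule Pcmp) (use m in auto)
  show ?thesis unfolding a P_simps 2 using m 1 by simp
qed

lemma inv_mem: "a \<in> topspace (arT P) \<Longrightarrow> inv P a \<in> topspace (arT P)"
  by (cases a) auto

lemma idn_mem: "x \<in> topspace (obT P) \<Longrightarrow> idn P x \<in> topspace (arT P)"
  by (cases x) auto

lemma S5a: assumes "a \<in> topspace (arT P)"
  shows "src P (inv P a) = tgt P a \<and> tgt P (inv P a) = src P a \<and> cmp P a (inv P a) = idn P (src P a)"
proof -
  obtain i j v g where a: "a = ((i,j),(v,g))" and m: "i \<in> I" "j \<in> I" "v \<in> topspace X" "v \<in> U i" "v \<in> U j" "g \<in> GA"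
    using assms by (cases a) auto
  have c0: "omul G (tgt G (ee i i i v)) (omul G (omul G (tgt G (ee i j i v)) (xx i j v)) (xx j i v)) = oone G"
    unfolding C1[of i j i v, OF m(1,2,1,3,4,5,4)] using m by (simp add: D1)
  have c1: "omul G (oinv G (omul G (tgt G (ee i i i v)) (omul G (omul G (tgt G (ee i j i v)) (xx i j v)) (xx j i v)))) (src G g) = src G g"
    unfolding c0 using m by simp
  let ?h = "amul G (amul G (amul G (idn G (oinv G (xx i j v))) (ainv G (ee i j i v)))
                              (ainv G (ee i i i v))) (inv G g)"
  have sh: "src G ?h = omul G (oinv G (xx i j v)) (tgt G g)" using m gpd_ax(3)[of g] by simp
  let ?w = "amul G g (ainv G (idn G (tgt G g)))"
  let ?e = "amul G (ainv G (ee i j i v)) (ainv G (ee i i i v))"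
  have gp: "amul G ?w ?e = amul G ?e ?w" using GP[of ?w ?e] m by simp
  have 1: "amul G (ee i j i v) (amul G (amul G ?w ?e) (amul G (idn G (tgt G g)) (amul G (ainv G g) (idn G (src G g)))))
     = amul G (ainv G (ee i i i v)) (idn G (src G g))"
    unfolding gp using m by simp
  have 2: "cmp P ((i,j),(v,g)) ((j,i),(v,?h)) = ((i,i),(v, amul G (ee i j i v) (amul G g (amul G (ainv G (idn G (src G ?h))) ?h))))"
    by (rule Pcmp) (use m sh in auto)
  show ?thesis unfolding a P_simps 2 sh using m 1 c1 gpd_ax(3)[of g] by (simp add: inv_formula)
qed

lemma S5: assumes am: "a \<in> topspace (arT P)"
  shows "src P (inv P a) = tgt P a \<and> tgt P (inv P a) = src P a \<and> cmp P a (inv P a) = idn P (src P a)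
     \<and> cmp P (inv P a) a = idn P (tgt P a)"
proof -
  let ?b = "inv P a" let ?c = "inv P ?b"
  have bm: "?b \<in> topspace (arT P)" and cm: "?c \<in> topspace (arT P)" using inv_mem am by auto
  note A = S5a[OF am] and B = S5a[OF bm]
  have ab: "(a, ?b) \<in> composable P" using am bm A by (auto simp: composable_def)
  have "a = cmp P a (idn P (tgt P a))" using S4r am by simp
  also have "\<dots> = cmp P a (cmp P ?b ?c)" using A B by simp
  also have "\<dots> = cmp P (cmp P a ?b) ?c" using S2[OF ab cm] B by simp
  also have "\<dots> = cmp P (idn P (src P ?c)) ?c" using A B by simp
  also have "\<dots> = ?c" using S4l cm by simp
  finally have "a = ?c" .
  then have "cmp P ?b a = idn P (src P ?b)" using B by simp
  then show ?thesis using A by simp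
qed

lemma G3: assumes ab: "(a,b) \<in> composable P" and gh: "(g,h) \<in> composable G"
  shows "actA P (cmp P a b) (cmp G g h) = cmp P (actA P a g) (actA P b h)"
proof -
  obtain i j k v g' h' where a: "a = ((i,j),(v,g'))" and b: "b = ((j,k),(v,h'))" and
    m: "i \<in> I" "j \<in> I" "k \<in> I" "v \<in> topspace X" "v \<in> U i" "v \<in> U j" "v \<in> U k" "g' \<in> GA" "h' \<in> GA"
    and tg': "tgt G g' = omul G (xx i j v) (src G h')" using ab unfolding compP by blast
  have mg: "g \<in> GA" "h \<in> GA" and tg: "tgt G g = src G h" using gh by (auto simp: composable_def)
  let ?w = "amul G g (ainv G (idn G (src G h)))"
  let ?e = "amul G (ainv G (idn G (src G h'))) h'"
  have gp: "amul G ?w ?e = amul G ?e ?w" using GP[of ?w ?e] m mg tg by simp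
  have 1: "amul G (ee i j k v) (amul G g' (amul G (amul G ?w ?e) h)) = amul G (ee i j k v) (amul G g' (amul G (amul G ?e ?w) h))"
    unfolding gp ..
  have 2: "cmp P ((i,j),(v,amul G g' g)) ((j,k),(v,amul G h' h)) = ((i,k),(v, amul G (ee i j k v) (amul G (amul G g' g) (amul G (ainv G (idn G (src G (amul G h' h)))) (amul G h' h)))))"
    by (rule Pcmp) (use m mg tg tg' in auto)
  show ?thesis unfolding a b P_simps 2 using m mg tg tg' 1 by (simp add: Pcmp cmp_formula)
qed

end



lemma cont_sum_local:
  assumes h: "continuous_map Z (sum_topology S I) h"
    and c: "\<And>i. i \<in> I \<Longrightarrow> continuous_map (subtopology Z {z. fst (h z) = i}) Y f"
  shows "continuous_map Z Y f"
proof (rule continuous_map_local)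
  fix z assume z: "z \<in> topspace Z"
  have hz: "h z \<in> topspace (sum_topology S I)" using cm_mem[OF h z] .
  define i where "i = fst (h z)"
  have i: "i \<in> I" using hz by (auto simp: i_def)
  let ?N = "{z \<in> topspace Z. h z \<in> {p \<in> topspace (sum_topology S I). fst p = i}}"
  have o: "openin Z ?N" using h openin_sum_slice[of S I i] unfolding continuous_map_def by blast
  have e: "subtopology Z ?N = subtopology Z {z. fst (h z) = i}"
  proof -
    have "?N = topspace Z \<inter> {z. fst (h z) = i}" using cm_mem[OF h] by auto
    then show ?thesis by (simp add: subtopology_restrict)
  qed
  show "\<exists>N. openin Z N \<and> z \<in> N \<and> continuous_map (subtopology Z N) Y f"
    by (rule exI[of _ ?N]) (use o e c[OF i] z hz i_def in auto)
qed

lemma cm_prod_sub: "continuous_map (prod_topology (subtopology X S) Y) (prod_topology X Y) (\<lambda>x. x)"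
proof -
  have "continuous_map (prod_topology (subtopology X S) Y) (prod_topology X Y) (\<lambda>x. (fst x, snd x))"
    by (intro continuous_map_pairedI continuous_map_into_fulltopology[OF continuous_map_fst] continuous_map_snd)
  then show ?thesis by simp
qed

lemma cm_sub_fst: "S \<subseteq> T \<Longrightarrow> continuous_map (prod_topology (subtopology X S) Y) (subtopology X T) fst"
proof -
  assume "S \<subseteq> T"
  have "continuous_map (prod_topology (subtopology X S) Y) (subtopology X S) fst" by (rule continuous_map_fst)
  then show ?thesis using \<open>S \<subseteq> T\<close> by (auto simp: continuous_map_in_subtopology)
qed

context tg begin

lemma CA_amul: "continuous_map Z (arT G) f \<Longrightarrow> continuous_map Z (arT G) g \<Longrightarrow> continuous_map Z (arT G) (\<lambda>z. amul G (f z) (g z))"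
  using continuous_map_compose[OF continuous_map_pairedI cont_amul] by (simp add: o_def)
lemma CO_omul: "continuous_map Z (obT G) f \<Longrightarrow> continuous_map Z (obT G) g \<Longrightarrow> continuous_map Z (obT G) (\<lambda>z. omul G (f z) (g z))"
  using continuous_map_compose[OF continuous_map_pairedI cont_omul] by (simp add: o_def)
lemma CA_ainv: "continuous_map Z (arT G) f \<Longrightarrow> continuous_map Z (arT G) (\<lambda>z. ainv G (f z))"
  using continuous_map_compose[OF _ cont_ainv] by (simp add: o_def)
lemma CO_oinv: "continuous_map Z (obT G) f \<Longrightarrow> continuous_map Z (obT G) (\<lambda>z. oinv G (f z))"
  using continuous_map_compose[OF _ cont_oinv] by (simp add: o_def)
lemma CO_src: "continuous_map Z (arT G) f \<Longrightarrow> continuous_map Z (obT G) (\<lambda>z. src G (f z))"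
  using continuous_map_compose[OF _ cont_src] by (simp add: o_def)
lemma CO_tgt: "continuous_map Z (arT G) f \<Longrightarrow> continuous_map Z (obT G) (\<lambda>z. tgt G (f z))"
  using continuous_map_compose[OF _ cont_tgt] by (simp add: o_def)
lemma CA_idn: "continuous_map Z (obT G) f \<Longrightarrow> continuous_map Z (arT G) (\<lambda>z. idn G (f z))"
  using continuous_map_compose[OF _ cont_idn] by (simp add: o_def)
lemma CA_inv: "continuous_map Z (arT G) f \<Longrightarrow> continuous_map Z (arT G) (\<lambda>z. inv G (f z))"
  using continuous_map_compose[OF _ cont_inv] by (simp add: o_def)
lemma CA_cmp:
  assumes f: "continuous_map Z (arT G) f" and g: "continuous_map Z (arT G) g"
    and c: "\<And>z. z \<in> topspace Z \<Longrightarrow> tgt G (f z) = src G (g z)"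
  shows "continuous_map Z (arT G) (\<lambda>z. cmp G (f z) (g z))"
proof -
  have "continuous_map Z (subtopology (prod_topology (arT G) (arT G)) (composable G)) (\<lambda>z. (f z, g z))"
    using f g c cm_mem[OF f] cm_mem[OF g]
    by (auto intro!: continuous_map_into_subtopology continuous_map_pairedI simp: composable_def)
  from continuous_map_compose[OF this cont_cmp] show ?thesis by (simp add: o_def)
qed

lemmas CG = CA_amul CO_omul CA_ainv CO_oinv CO_src CO_tgt CA_idn CA_inv

end

context cc begin

lemma CX_xx:
  assumes "i \<in> I" "j \<in> I" "continuous_map Z X f" "\<And>z. z \<in> topspace Z \<Longrightarrow> f z \<in> U i \<and> f z \<in> U j"
  shows "continuous_map Z (obT G) (\<lambda>z. xx i j (f z))"
proof -
  have "continuous_map Z (subtopology X (U i \<inter> U j)) f"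
    using assms by (auto intro!: continuous_map_into_subtopology)
  from continuous_map_compose[OF this cont_xx[OF assms(1,2)]] show ?thesis by (simp add: o_def)
qed

lemma CX_ee:
  assumes "i \<in> I" "j \<in> I" "k \<in> I" "continuous_map Z X f" "\<And>z. z \<in> topspace Z \<Longrightarrow> f z \<in> U i \<and> f z \<in> U j \<and> f z \<in> U k"
  shows "continuous_map Z (arT G) (\<lambda>z. ee i j k (f z))"
proof -
  have "continuous_map Z (subtopology X (U i \<inter> U j \<inter> U k)) f"
    using assms by (auto intro!: continuous_map_into_subtopology)
  from continuous_map_compose[OF this cont_ee[OF assms(1,2,3)]] show ?thesis
    by (simp add: o_def continuous_map_in_subtopology)
qed

lemma snd_contA: "continuous_map (arT P) (prod_topology X (arT G)) snd"
proof -
  have "continuous_map (sum_topology (\<lambda>(i, j). prod_topology (subtopology X (U i \<inter> U j)) (arT G)) (I \<times> I))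
     (prod_topology X (arT G)) snd"
    by (rule continuous_map_from_sum) (auto simp: case_prod_beta cm_prod_sub)
  then show ?thesis by (simp add: Pc_def)
qed

lemma snd_contO: "continuous_map (obT P) (prod_topology X (obT G)) snd"
proof -
  have "continuous_map (sum_topology (\<lambda>i. prod_topology (subtopology X (U i)) (obT G)) I)
     (prod_topology X (obT G)) snd"
    by (rule continuous_map_from_sum) (auto simp: cm_prod_sub)
  then show ?thesis by (simp add: Pc_def)
qed

lemma PA_v: "continuous_map Z (arT P) f \<Longrightarrow> continuous_map Z X (\<lambda>z. fst (snd (f z)))"
  using continuous_map_compose[OF continuous_map_compose[OF _ snd_contA] continuous_map_fst] by (simp add: o_def)
lemma PA_g: "continuous_map Z (arT P) f \<Longrightarrow> continuous_map Z (arT G) (\<lambda>z. snd (snd (f z)))"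
  using continuous_map_compose[OF continuous_map_compose[OF _ snd_contA] continuous_map_snd] by (simp add: o_def)
lemma PO_u: "continuous_map Z (obT P) f \<Longrightarrow> continuous_map Z X (\<lambda>z. fst (snd (f z)))"
  using continuous_map_compose[OF continuous_map_compose[OF _ snd_contO] continuous_map_fst] by (simp add: o_def)
lemma PO_x: "continuous_map Z (obT P) f \<Longrightarrow> continuous_map Z (obT G) (\<lambda>z. snd (snd (f z)))"
  using continuous_map_compose[OF continuous_map_compose[OF _ snd_contO] continuous_map_snd] by (simp add: o_def)

lemma P_arT: "arT P = sum_topology (\<lambda>(i, j). prod_topology (subtopology X (U i \<inter> U j)) (arT G)) (I \<times> I)"
  by (simp add: Pc_def)
lemma P_obT: "obT P = sum_topology (\<lambda>i. prod_topology (subtopology X (U i)) (obT G)) I"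
  by (simp add: Pc_def)

lemma into_arT:
  assumes "i \<in> I" "j \<in> I" "continuous_map Z X f" "\<And>z. z \<in> topspace Z \<Longrightarrow> f z \<in> U i \<and> f z \<in> U j"
    "continuous_map Z (arT G) g"
  shows "continuous_map Z (arT P) (\<lambda>z. ((i,j),(f z, g z)))"
proof -
  have "continuous_map Z (prod_topology (subtopology X (U i \<inter> U j)) (arT G)) (\<lambda>z. (f z, g z))"
    using assms by (auto intro!: continuous_map_pairedI continuous_map_into_subtopology)
  then show ?thesis unfolding P_arT
    using continuous_map_into_sum[of "(i,j)" "I \<times> I" Z "\<lambda>(i, j). prod_topology (subtopology X (U i \<inter> U j)) (arT G)" "\<lambda>z. (f z, g z)"] assms
    by simp
qed

lemma into_obT:
  assumes "i \<in> I" "continuous_map Z X f" "\<And>z. z \<in> topspace Z \<Longrightarrow> f z \<in> U i"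
    "continuous_map Z (obT G) g"
  shows "continuous_map Z (obT P) (\<lambda>z. (i,(f z, g z)))"
proof -
  have "continuous_map Z (prod_topology (subtopology X (U i)) (obT G)) (\<lambda>z. (f z, g z))"
    using assms by (auto intro!: continuous_map_pairedI continuous_map_into_subtopology)
  then show ?thesis unfolding P_obT
    using continuous_map_into_sum[of i I Z "\<lambda>i. prod_topology (subtopology X (U i)) (obT G)" "\<lambda>z. (f z, g z)"] assms
    by simp
qed

lemma idsub: "continuous_map (subtopology Y S) Y (\<lambda>z. z)"
  using continuous_map_id_subt unfolding id_def .
lemma idA: "continuous_map (arT P) (sum_topology (\<lambda>(i, j). prod_topology (subtopology X (U i \<inter> U j)) (arT G)) (I \<times> I)) (\<lambda>z. z)"
  using continuous_map_id[unfolded id_def, of "arT P"] unfolding P_arT .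
lemma idO: "continuous_map (obT P) (sum_topology (\<lambda>i. prod_topology (subtopology X (U i)) (obT G)) I) (\<lambda>z. z)"
  using continuous_map_id[unfolded id_def, of "obT P"] unfolding P_obT .

lemma cont_srcP: "continuous_map (arT P) (obT P) (src P)"
proof (rule cont_sum_local[OF idA])
  fix ij assume "ij \<in> I \<times> I"
  then obtain i j where ij: "ij = (i,j)" "i \<in> I" "j \<in> I" by auto
  let ?Z = "subtopology (arT P) {z. fst z = ij}"
  have "continuous_map ?Z (obT P) (\<lambda>z. (i,(fst (snd z), src G (snd (snd z)))))"
    by (rule into_obT) (use ij in \<open>auto intro: PA_v[OF idsub] CO_src PA_g[OF idsub] simp: P_top\<close>)
  then show "continuous_map ?Z (obT P) (src P)"
    by (rule continuous_map_eq) (use ij in \<open>auto simp: P_top\<close>)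
qed

lemma cont_tgtP: "continuous_map (arT P) (obT P) (tgt P)"
proof (rule cont_sum_local[OF idA])
  fix ij assume "ij \<in> I \<times> I"
  then obtain i j where ij: "ij = (i,j)" "i \<in> I" "j \<in> I" by auto
  let ?Z = "subtopology (arT P) {z. fst z = ij}"
  have "continuous_map ?Z (obT P) (\<lambda>z. (j,(fst (snd z), omul G (oinv G (xx i j (fst (snd z)))) (tgt G (snd (snd z))))))"
    by (rule into_obT) (use ij in \<open>auto intro!: PA_v[OF idsub] CO_tgt PA_g[OF idsub] CO_omul CO_oinv CX_xx simp: P_top\<close>)
  then show "continuous_map ?Z (obT P) (tgt P)"
    by (rule continuous_map_eq) (use ij in \<open>auto simp: P_top\<close>)
qed

lemma cont_invP: "continuous_map (arT P) (arT P) (inv P)"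
proof (rule cont_sum_local[OF idA])
  fix ij assume "ij \<in> I \<times> I"
  then obtain i j where ij: "ij = (i,j)" "i \<in> I" "j \<in> I" by auto
  let ?Z = "subtopology (arT P) {z. fst z = ij}"
  have "continuous_map ?Z (arT P) (\<lambda>z. ((j,i),(fst (snd z), amul G (amul G (amul G (idn G (oinv G (xx i j (fst (snd z))))) (ainv G (ee i j i (fst (snd z)))))
                              (ainv G (ee i i i (fst (snd z))))) (inv G (snd (snd z))))))"
    by (rule into_arT) (use ij in \<open>auto intro!: PA_v[OF idsub] PA_g[OF idsub] CG CX_xx CX_ee simp: P_top\<close>)
  then show "continuous_map ?Z (arT P) (inv P)"
    by (rule continuous_map_eq) (use ij in \<open>auto simp: P_top\<close>)
qed

lemma cont_idnP: "continuous_map (obT P) (arT P) (idn P)"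
proof (rule cont_sum_local[OF idO])
  fix i assume i: "i \<in> I"
  let ?Z = "subtopology (obT P) {z. fst z = i}"
  have "continuous_map ?Z (arT P) (\<lambda>z. ((i,i),(fst (snd z), amul G (ainv G (ee i i i (fst (snd z)))) (idn G (snd (snd z))))))"
    by (rule into_arT) (use i in \<open>auto intro!: PO_u[OF idsub] PO_x[OF idsub] CG CX_xx CX_ee simp: P_top\<close>)
  then show "continuous_map ?Z (arT P) (idn P)"
    by (rule continuous_map_eq) (use i in \<open>auto simp: P_top\<close>)
qed

lemma fstO: "continuous_map (prod_topology (obT P) (obT G)) (sum_topology (\<lambda>i. prod_topology (subtopology X (U i)) (obT G)) I) fst"
  unfolding P_obT[symmetric] by (rule continuous_map_fst)
lemma fstA: "continuous_map (prod_topology (arT P) (arT G)) (sum_topology (\<lambda>(i, j). prod_topology (subtopology X (U i \<inter> U j)) (arT G)) (I \<times> I)) fst"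
  unfolding P_arT[symmetric] by (rule continuous_map_fst)

lemma cont_actO: "continuous_map (prod_topology (obT P) (obT G)) (obT P) (\<lambda>(p, x). actO P p x)"
proof (rule cont_sum_local[OF fstO])
  fix i assume i: "i \<in> I"
  let ?Z = "subtopology (prod_topology (obT P) (obT G)) {z. fst (fst z) = i}"
  have f: "continuous_map ?Z (obT P) fst"
    using continuous_map_subtopology_fst .
  have "continuous_map ?Z (obT P) (\<lambda>z. (i,(fst (snd (fst z)), omul G (snd (snd (fst z))) (snd z))))"
    by (rule into_obT) (use i in \<open>auto intro!: PO_u[OF f] PO_x[OF f] CG continuous_map_subtopology_snd simp: P_top\<close>)
  then show "continuous_map ?Z (obT P) (\<lambda>(p, x). actO P p x)"
    by (rule continuous_map_eq) (use i in \<open>auto simp: P_top\<close>)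
qed

lemma cont_actA: "continuous_map (prod_topology (arT P) (arT G)) (arT P) (\<lambda>(p, x). actA P p x)"
proof (rule cont_sum_local[OF fstA])
  fix ij assume "ij \<in> I \<times> I"
  then obtain i j where ij: "ij = (i,j)" "i \<in> I" "j \<in> I" by auto
  let ?Z = "subtopology (prod_topology (arT P) (arT G)) {z. fst (fst z) = (i,j)}"
  have f: "continuous_map ?Z (arT P) fst"
    using continuous_map_subtopology_fst .
  have "continuous_map ?Z (arT P) (\<lambda>z. ((i,j),(fst (snd (fst z)), amul G (snd (snd (fst z))) (snd z))))"
    by (rule into_arT) (use ij in \<open>auto intro!: PA_v[OF f] PA_g[OF f] CG continuous_map_subtopology_snd simp: P_top\<close>)
  then show "continuous_map (subtopology (prod_topology (arT P) (arT G)) {z. fst (fst z) = ij}) (arT P) (\<lambda>(p, x). actA P p x)"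
    unfolding ij(1) by (rule continuous_map_eq) (use ij in \<open>auto simp: P_top\<close>)
qed

lemma cont_pi0: "continuous_map (obT P) X \<pi>c0"
  by (rule continuous_map_eq[OF PO_u[OF continuous_map_id[unfolded id_def]]]) (auto simp: \<pi>c0_def P_top)
lemma cont_pi1: "continuous_map (arT P) X \<pi>c1"
  by (rule continuous_map_eq[OF PA_v[OF continuous_map_id[unfolded id_def]]]) (auto simp: \<pi>c1_def P_top)

lemma cont_cmpP: "continuous_map (subtopology (prod_topology (arT P) (arT P)) (composable P)) (arT P) (\<lambda>(a, b). cmp P a b)"
proof -
  let ?S = "\<lambda>(i, j). prod_topology (subtopology X (U i \<inter> U j)) (arT G)"
  let ?Z = "subtopology (prod_topology (arT P) (arT P)) (composable P)"
  have h1: "continuous_map ?Z (sum_topology ?S (I \<times> I)) fst"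
    unfolding P_arT[symmetric] by (rule continuous_map_subtopology_fst)
  show ?thesis
  proof (rule cont_sum_local[OF h1])
    fix ij assume "ij \<in> I \<times> I"
    then obtain i j where ij: "ij = (i,j)" "i \<in> I" "j \<in> I" by auto
    have h2: "continuous_map (subtopology ?Z {z. fst z \<in> {p. fst p = ij}}) (sum_topology ?S (I \<times> I)) snd"
      unfolding P_arT[symmetric] subtopology_subtopology by (rule continuous_map_subtopology_snd)
    show "continuous_map (subtopology ?Z {z. fst (fst z) = ij}) (arT P) (\<lambda>(a, b). cmp P a b)"
    proof (rule cont_sum_local[OF h2[simplified]])
      fix jk assume "jk \<in> I \<times> I"
      then obtain j' k where jk: "jk = (j',k)" "j' \<in> I" "k \<in> I" by auto
      let ?Z2 = "subtopology (subtopology ?Z {z. fst (fst z) = (i,j)}) {z. fst (snd z) = (j',k)}"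
      have pts: "\<exists>v g h. z = (((i,j),(v,g)),((j,k),(v,h))) \<and> v \<in> topspace X \<and> v \<in> U i \<and> v \<in> U j \<and> v \<in> U k
          \<and> g \<in> GA \<and> h \<in> GA \<and> tgt G g = omul G (xx i j v) (src G h)" if "z \<in> topspace ?Z2" for z
      proof -
        have "(fst z, snd z) \<in> composable P" "fst (fst z) = (i,j)" "fst (snd z) = (j',k)" using that by auto
        then show ?thesis unfolding compP by (cases z) auto
      qed
      have f1: "continuous_map ?Z2 (arT P) fst"
        unfolding subtopology_subtopology by (rule continuous_map_subtopology_fst)
      have f2: "continuous_map ?Z2 (arT P) snd"
        unfolding subtopology_subtopology by (rule continuous_map_subtopology_snd)
      have "continuous_map ?Z2 (arT P) (\<lambda>z. ((i,k),(fst (snd (fst z)), amul G (ee i j k (fst (snd (fst z))))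
             (cmp G (snd (snd (fst z))) (amul G (idn G (xx i j (fst (snd (fst z))))) (snd (snd (snd z))))))))"
      proof -
        note v = PA_v[OF f1]
        have vm: "fst (snd (fst z)) \<in> U i \<and> fst (snd (fst z)) \<in> U j \<and> fst (snd (fst z)) \<in> U k" if "z \<in> topspace ?Z2" for z
          using pts[OF that] by auto
        have E: "continuous_map ?Z2 (arT G) (\<lambda>z. ee i j k (fst (snd (fst z))))"
          by (rule CX_ee[OF ij(2,3) jk(3) v]) (use vm in blast)
        have Xc: "continuous_map ?Z2 (obT G) (\<lambda>z. xx i j (fst (snd (fst z))))"
          by (rule CX_xx[OF ij(2,3) v]) (use vm in blast)
        have c: "continuous_map ?Z2 (arT G) (\<lambda>z. cmp G (snd (snd (fst z))) (amul G (idn G (xx i j (fst (snd (fst z))))) (snd (snd (snd z)))))"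
        proof (rule CA_cmp[OF PA_g[OF f1] CA_amul[OF CA_idn[OF Xc] PA_g[OF f2]]])
          fix z assume "z \<in> topspace ?Z2"
          then obtain v g h where "z = (((i,j),(v,g)),((j,k),(v,h)))" "v \<in> topspace X" "v \<in> U i" "v \<in> U j" "v \<in> U k"
            "g \<in> GA" "h \<in> GA" "tgt G g = omul G (xx i j v) (src G h)" using pts by blast
          then show "tgt G (snd (snd (fst z))) = src G (amul G (idn G (xx i j (fst (snd (fst z))))) (snd (snd (snd z))))"
            using ij jk by simp
        qed
        show ?thesis by (rule into_arT[OF ij(2) jk(3) v _ CA_amul[OF E c]]) (use vm in blast)
      qed
      then show "continuous_map (subtopology (subtopology ?Z {z. fst (fst z) = ij}) {z. fst (snd z) = jk}) (arT P) (\<lambda>(a, b). cmp P a b)"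
        unfolding ij(1) jk(1)
      proof (rule continuous_map_eq)
        fix z assume "z \<in> topspace ?Z2"
        then obtain v g h where "z = (((i,j),(v,g)),((j,k),(v,h)))" using pts by blast
        then show "((i,k),(fst (snd (fst z)), amul G (ee i j k (fst (snd (fst z))))
             (cmp G (snd (snd (fst z))) (amul G (idn G (xx i j (fst (snd (fst z))))) (snd (snd (snd z))))))) = (case z of (a, b) \<Rightarrow> cmp P a b)"
          by (simp add: P_cmp_raw)
      qed
    qed
  qed
qed

end


context cc begin

lemma P_2space: "topological_2space P"
  unfolding topological_2space_def
  apply (intro conjI)
  subgoal by (rule cont_srcP)
  subgoal by (rule cont_tgtP)
  subgoal by (rule cont_idnP)
  subgoal by (rule cont_invP)
  subgoal by (rule cont_cmpP)
  subgoal using S1 by blast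
  subgoal using S2 by blast
  subgoal using S3 by blast
  subgoal using S4l S4r by blast
  subgoal using S5 by blast
  done

lemma P_G2space: "G_2space G P"
  unfolding G_2space_def
  apply (intro conjI P_2space cont_actO cont_actA)
  subgoal by (auto simp: P_top)
  subgoal by (auto simp: P_top)
  subgoal using G3 by blast
  subgoal by (auto simp: P_top)
  subgoal by (auto simp: P_top)
  done

lemma P_functor: "cont_functor P (disc X) \<pi>c0 \<pi>c1"
  unfolding cont_functor_def
  apply (intro conjI)
  subgoal using cont_pi0 by (simp add: disc_def)
  subgoal using cont_pi1 by (simp add: disc_def)
  subgoal by (auto simp: disc_def \<pi>c0_def \<pi>c1_def P_top)
  subgoal unfolding compP by (auto simp: disc_def \<pi>c1_def P_cmp_raw)
  subgoal by (auto simp: disc_def \<pi>c0_def \<pi>c1_def P_top)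
  done

end



lemma pic_simps [simp]: "\<pi>c0 (j,(u,x)) = u" "\<pi>c1 ((j,k),(v,g)) = v"
  by (simp_all add: \<pi>c0_def \<pi>c1_def)

locale chart = cc G X I U xx ee for G :: "('g0, 'g1, 'm) twogrp_scheme" and X :: "'x topology"
    and I :: "'i set" and U xx ee +
  fixes i :: 'i
  assumes iI: "i \<in> I"
begin

abbreviation "R \<equiv> restr P \<pi>c0 (U i)"
abbreviation "T \<equiv> triv X (U i) G"

definition "psi0 = (\<lambda>(j,(u,x)). (u, omul G (xx i j u) x))"
definition "psi1 = (\<lambda>((j,k),(v,g)). (v, amul G (ee i j k v) (amul G (idn G (xx i j v)) g)))"
definition "phi0 = (\<lambda>(u,z). (i,(u,z)))"
definition "phi1 = (\<lambda>(v,h). ((i,i),(v, amul G (ainv G (ee i i i v)) h)))"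
definition "eps = (\<lambda>(j,(u,x)). ((i,j),(u, idn G (omul G (xx i j u) x))))"
definition "bet = (\<lambda>(u,z). (u, amul G (ainv G (ee i i i u)) (idn G z)))"

lemma maps [simp]:
  "psi0 (j,(u,x)) = (u, omul G (xx i j u) x)"
  "psi1 ((j,k),(v,g)) = (v, amul G (ee i j k v) (amul G (idn G (xx i j v)) g))"
  "phi0 (u,z) = (i,(u,z))"
  "phi1 (v,h) = ((i,i),(v, amul G (ainv G (ee i i i v)) h))"
  "eps (j,(u,x)) = ((i,j),(u, idn G (omul G (xx i j u) x)))"
  "bet (u,z) = (u, amul G (ainv G (ee i i i u)) (idn G z))"
  by (simp_all add: psi0_def psi1_def phi0_def phi1_def eps_def bet_def)

lemma R_simps [simp]:
  "src R = src P" "tgt R = tgt P" "cmp R = cmp P" "idn R = idn P" "inv R = inv P" "actO R = actO P" "actA R = actA P"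
  "obT R = subtopology (obT P) {p. \<pi>c0 p \<in> U i}"
  "arT R = subtopology (arT P) {a. \<pi>c0 (src P a) \<in> U i \<and> \<pi>c0 (tgt P a) \<in> U i}"
  by (simp_all add: restr_def)

lemma T_simps [simp]:
  "src T (u,g) = (u, src G g)" "tgt T (u,g) = (u, tgt G g)" "cmp T (u,g) (v,h) = (u, cmp G g h)"
  "idn T (u,x) = (u, idn G x)" "actO T (u,x) y = (u, omul G x y)" "actA T (u,g) h = (u, amul G g h)"
  "obT T = prod_topology (subtopology X (U i)) (obT G)"
  "arT T = prod_topology (subtopology X (U i)) (arT G)"
  by (simp_all add: triv_def)

lemma memRO [simp]: "(j,(u,x)) \<in> topspace (obT R) \<longleftrightarrow> j \<in> I \<and> u \<in> topspace X \<and> u \<in> U j \<and> x \<in> GO \<and> u \<in> U i"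
  unfolding R_simps by (auto simp: \<pi>c0_def)
lemma memRA [simp]: "((j,k),(v,g)) \<in> topspace (arT R) \<longleftrightarrow> j \<in> I \<and> k \<in> I \<and> v \<in> topspace X \<and> v \<in> U j \<and> v \<in> U k \<and> g \<in> GA \<and> v \<in> U i"
  unfolding R_simps by (auto simp: \<pi>c0_def)

lemma compR:
  "(a,b) \<in> composable R \<longleftrightarrow> (\<exists>j k l v g h. a = ((j,k),(v,g)) \<and> b = ((k,l),(v,h)) \<and> j \<in> I \<and> k \<in> I \<and> l \<in> I \<and>
     v \<in> topspace X \<and> v \<in> U j \<and> v \<in> U k \<and> v \<in> U l \<and> v \<in> U i \<and> g \<in> GA \<and> h \<in> GA \<and>
     tgt G g = omul G (xx j k v) (src G h))"
proof -
  have "(a,b) \<in> composable R \<longleftrightarrow> (a,b) \<in> composable P \<and> a \<in> topspace (arT R) \<and> b \<in> topspace (arT R)"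
    by (auto simp: composable_def)
  then show ?thesis unfolding compP by auto
qed



lemma idsub2: "continuous_map (subtopology (subtopology Y A) B) Y (\<lambda>z. z)"
  unfolding subtopology_subtopology by (rule idsub)

lemma ptsRO: "z \<in> topspace (subtopology (subtopology (obT P) {p. \<pi>c0 p \<in> U i}) {z. fst z = j}) \<Longrightarrow>
   \<exists>u x. z = (j,(u,x)) \<and> j \<in> I \<and> u \<in> topspace X \<and> u \<in> U j \<and> u \<in> U i \<and> x \<in> GO"
  by (cases z) auto
lemma ptsRA: "z \<in> topspace (subtopology (subtopology (arT P) {a. \<pi>c0 (src P a) \<in> U i \<and> \<pi>c0 (tgt P a) \<in> U i}) {z. fst z = (j,k)}) \<Longrightarrow>
   \<exists>v g. z = ((j,k),(v,g)) \<and> j \<in> I \<and> k \<in> I \<and> v \<in> topspace X \<and> v \<in> U j \<and> v \<in> U k \<and> v \<in> U i \<and> g \<in> GA"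
  by (cases z) auto

lemma cont_psi0: "continuous_map (obT R) (obT T) psi0"
  unfolding R_simps T_simps
proof (rule cont_sum_local[OF continuous_map_from_subtopology[OF idO]])
  fix j assume j: "j \<in> I"
  let ?Z = "subtopology (subtopology (obT P) {p. \<pi>c0 p \<in> U i}) {z. fst z = j}"
  note u = PO_u[OF idsub2]
  have um: "fst (snd z) \<in> U i \<and> fst (snd z) \<in> U j" if "z \<in> topspace ?Z" for z using ptsRO[OF that] by force
  have "continuous_map ?Z (prod_topology (subtopology X (U i)) (obT G)) (\<lambda>z. (fst (snd z), omul G (xx i j (fst (snd z))) (snd (snd z))))"
  proof (intro continuous_map_pairedI continuous_map_into_subtopology u CO_omul PO_x[OF idsub2] CX_xx[OF iI j u])
    fix z assume "z \<in> topspace ?Z" then show "fst (snd z) \<in> U i \<and> fst (snd z) \<in> U j" using um by blast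
  next
    show "(\<lambda>z. fst (snd z)) \<in> topspace ?Z \<rightarrow> U i" using um by blast
  qed
  then show "continuous_map ?Z (prod_topology (subtopology X (U i)) (obT G)) psi0"
    by (rule continuous_map_eq) (use ptsRO in force)
qed

lemma cont_psi1: "continuous_map (arT R) (arT T) psi1"
  unfolding R_simps T_simps
proof (rule cont_sum_local[OF continuous_map_from_subtopology[OF idA]])
  fix jk assume "jk \<in> I \<times> I"
  then obtain j k where jk: "jk = (j,k)" "j \<in> I" "k \<in> I" by auto
  let ?Z = "subtopology (subtopology (arT P) {a. \<pi>c0 (src P a) \<in> U i \<and> \<pi>c0 (tgt P a) \<in> U i}) {z. fst z = (j,k)}"
  note v = PA_v[OF idsub2]
  have vm: "fst (snd z) \<in> U i \<and> fst (snd z) \<in> U j \<and> fst (snd z) \<in> U k" if "z \<in> topspace ?Z" for z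
    using ptsRA[OF that] by force
  have "continuous_map ?Z (prod_topology (subtopology X (U i)) (arT G)) (\<lambda>z. (fst (snd z),
      amul G (ee i j k (fst (snd z))) (amul G (idn G (xx i j (fst (snd z)))) (snd (snd z)))))"
  proof (intro continuous_map_pairedI continuous_map_into_subtopology v CA_amul CA_idn PA_g[OF idsub2]
      CX_xx[OF iI jk(2) v] CX_ee[OF iI jk(2,3) v])
    show "(\<lambda>z. fst (snd z)) \<in> topspace ?Z \<rightarrow> U i" using vm by force
  qed (use vm in force)+
  then show "continuous_map (subtopology (subtopology (arT P) {a. \<pi>c0 (src P a) \<in> U i \<and> \<pi>c0 (tgt P a) \<in> U i}) {z. fst z = jk})
      (prod_topology (subtopology X (U i)) (arT G)) psi1"
    unfolding jk(1) by (rule continuous_map_eq) (use ptsRA in force)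
qed

lemma cont_eps: "continuous_map (obT R) (arT R) eps"
  unfolding R_simps
proof (rule cont_sum_local[OF continuous_map_from_subtopology[OF idO]])
  fix j assume j: "j \<in> I"
  let ?Z = "subtopology (subtopology (obT P) {p. \<pi>c0 p \<in> U i}) {z. fst z = j}"
  note u = PO_u[OF idsub2]
  have um: "fst (snd z) \<in> U i \<and> fst (snd z) \<in> U j" if "z \<in> topspace ?Z" for z using ptsRO[OF that] by force
  have "continuous_map ?Z (arT P) (\<lambda>z. ((i,j),(fst (snd z), idn G (omul G (xx i j (fst (snd z))) (snd (snd z))))))"
    by (rule into_arT[OF iI j u]) (use um in \<open>auto intro!: CA_idn CO_omul CX_xx[OF iI j u] PO_x[OF idsub2]\<close>)
  then have "continuous_map ?Z (subtopology (arT P) {a. \<pi>c0 (src P a) \<in> U i \<and> \<pi>c0 (tgt P a) \<in> U i})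
      (\<lambda>z. ((i,j),(fst (snd z), idn G (omul G (xx i j (fst (snd z))) (snd (snd z))))))"
    by (rule continuous_map_into_subtopology) (use um in force)
  then show "continuous_map ?Z (subtopology (arT P) {a. \<pi>c0 (src P a) \<in> U i \<and> \<pi>c0 (tgt P a) \<in> U i}) eps"
    by (rule continuous_map_eq) (use ptsRO in force)
qed

lemma cont_phi0: "continuous_map (obT T) (obT R) phi0"
  unfolding R_simps T_simps
proof -
  let ?Z = "prod_topology (subtopology X (U i)) (obT G)"
  have f: "continuous_map ?Z X fst" by (rule continuous_map_into_fulltopology[OF continuous_map_fst])
  have "continuous_map ?Z (obT P) (\<lambda>z. (i,(fst z, snd z)))"
    by (rule into_obT[OF iI f]) (auto intro: continuous_map_snd)
  then have "continuous_map ?Z (subtopology (obT P) {p. \<pi>c0 p \<in> U i}) (\<lambda>z. (i,(fst z, snd z)))"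
    by (rule continuous_map_into_subtopology) auto
  then show "continuous_map ?Z (subtopology (obT P) {p. \<pi>c0 p \<in> U i}) phi0"
    by (rule continuous_map_eq) auto
qed

lemma cont_phi1: "continuous_map (arT T) (arT R) phi1"
  unfolding R_simps T_simps
proof -
  let ?Z = "prod_topology (subtopology X (U i)) (arT G)"
  have f: "continuous_map ?Z X fst" by (rule continuous_map_into_fulltopology[OF continuous_map_fst])
  have "continuous_map ?Z (arT P) (\<lambda>z. ((i,i),(fst z, amul G (ainv G (ee i i i (fst z))) (snd z))))"
    by (rule into_arT[OF iI iI f]) (auto intro!: CA_amul CA_ainv CX_ee[OF iI iI iI f] continuous_map_snd)
  then have "continuous_map ?Z (subtopology (arT P) {a. \<pi>c0 (src P a) \<in> U i \<and> \<pi>c0 (tgt P a) \<in> U i}) (\<lambda>z. ((i,i),(fst z, amul G (ainv G (ee i i i (fst z))) (snd z))))"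
    by (rule continuous_map_into_subtopology) auto
  then show "continuous_map ?Z (subtopology (arT P) {a. \<pi>c0 (src P a) \<in> U i \<and> \<pi>c0 (tgt P a) \<in> U i}) phi1"
    by (rule continuous_map_eq) auto
qed

lemma cont_bet: "continuous_map (obT T) (arT T) bet"
  unfolding T_simps
proof -
  let ?Z = "prod_topology (subtopology X (U i)) (obT G)"
  have f: "continuous_map ?Z X fst" by (rule continuous_map_into_fulltopology[OF continuous_map_fst])
  have "continuous_map ?Z (prod_topology (subtopology X (U i)) (arT G)) (\<lambda>z. (fst z, amul G (ainv G (ee i i i (fst z))) (idn G (snd z))))"
    by (intro continuous_map_pairedI continuous_map_fst CA_amul CA_ainv CA_idn CX_ee[OF iI iI iI f] continuous_map_snd) auto
  then show "continuous_map ?Z (prod_topology (subtopology X (U i)) (arT G)) bet"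
    by (rule continuous_map_eq) auto
qed


lemma C2r:
  assumes "i \<in> I" "j \<in> I" "k \<in> I" "l \<in> I" "v \<in> topspace X" "v \<in> U i" "v \<in> U j" "v \<in> U k" "v \<in> U l" "r \<in> GA"
  shows "amul G (ee i k l v) (amul G (ee i j k v) r) = amul G (ee i j l v) (amul G (idn G (xx i j v)) (amul G (ee j k l v) (amul G (ainv G (idn G (xx i j v))) r)))"
proof -
  have "amul G (amul G (ee i k l v) (ee i j k v)) r = amul G (amul G (ee i j l v) (conj_act G (xx i j v) (ee j k l v))) r"
    using C2[OF assms(1-9)] by simp
  then show ?thesis using assms by simp
qed

lemma psi_cmp:
  assumes ab: "(a,b) \<in> composable R"
  shows "psi1 (cmp R a b) = cmp T (psi1 a) (psi1 b)"
proof -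
  obtain j k l v g h where a: "a = ((j,k),(v,g))" and b: "b = ((k,l),(v,h))" and
    m: "j \<in> I" "k \<in> I" "l \<in> I" "v \<in> topspace X" "v \<in> U j" "v \<in> U k" "v \<in> U l" "v \<in> U i" "g \<in> GA" "h \<in> GA"
    and tg: "tgt G g = omul G (xx j k v) (src G h)" using ab unfolding compR by blast
  note mi = iI
  let ?w = "amul G (ee i j k v) (amul G (idn G (xx i j v)) (amul G g (amul G (ainv G (idn G (src G h))) (ainv G (idn G (xx i k v))))))"
  have tw: "tgt G ?w = oone G" using m mi tg by (simp add: C1'')
  have gp: "amul G ?w (ee i k l v) = amul G (ee i k l v) ?w" using GP[of ?w "ee i k l v"] m mi tw by simp
  have key: "amul G (amul G ?w (ee i k l v)) (amul G (idn G (xx i k v)) h) =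
     amul G (ee i j l v) (amul G (idn G (xx i j v)) (amul G (ee j k l v) (amul G g (amul G (ainv G (idn G (src G h))) h))))"
    unfolding gp using m mi by (simp add: C2r)
  have ct: "tgt G (amul G (ee i j k v) (amul G (idn G (xx i j v)) g)) = src G (amul G (ee i k l v) (amul G (idn G (xx i k v)) h))"
    using m mi tg by (simp add: C1'')
  show ?thesis unfolding a b R_simps using m mi tg key ct by (simp add: Pcmp cmp_formula C1'')
qed

lemma psi_functor: "G_functor G R T psi0 psi1"
  unfolding G_functor_def cont_functor_def
  apply (intro conjI)
  subgoal by (rule cont_psi0)
  subgoal by (rule cont_psi1)
  subgoal using iI by (auto simp: C1'')
  subgoal using psi_cmp by blast
  subgoal using iI by (auto simp: D3[of i])
  subgoal using iI by auto
  subgoal using iI by auto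
  done

lemma memTO [simp]: "(u,x) \<in> topspace (obT T) \<longleftrightarrow> u \<in> topspace X \<and> u \<in> U i \<and> x \<in> GO"
  by auto
lemma memTA [simp]: "(u,g) \<in> topspace (arT T) \<longleftrightarrow> u \<in> topspace X \<and> u \<in> U i \<and> g \<in> GA"
  by auto

lemma phi_cmp:
  assumes ab: "(a,b) \<in> composable T"
  shows "phi1 (cmp T a b) = cmp R (phi1 a) (phi1 b)"
proof -
  obtain u g h where a: "a = (u,g)" and b: "b = (u,h)" and m: "u \<in> topspace X" "u \<in> U i" "g \<in> GA" "h \<in> GA"
    and tg: "tgt G g = src G h"
    using ab by (cases a, cases b) (auto simp: composable_def)
  note mi = iI
  let ?w = "amul G g (ainv G (idn G (src G h)))"
  have gp: "amul G ?w (ainv G (ee i i i u)) = amul G (ainv G (ee i i i u)) ?w" using GP[of ?w "ainv G (ee i i i u)"] m mi tg by simp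
  have key: "amul G (amul G ?w (ainv G (ee i i i u))) h = amul G (ainv G (ee i i i u)) (amul G g (amul G (ainv G (idn G (src G h))) h))"
    unfolding gp using m mi by simp
  have c: "tgt G (amul G (ainv G (ee i i i u)) g) = omul G (xx i i u) (src G (amul G (ainv G (ee i i i u)) h))"
    using m mi tg by (simp add: D1)
  have 2: "cmp P ((i,i),(u,amul G (ainv G (ee i i i u)) g)) ((i,i),(u,amul G (ainv G (ee i i i u)) h)) =
     ((i,i),(u, amul G (ee i i i u) (amul G (amul G (ainv G (ee i i i u)) g) (amul G (ainv G (idn G (src G (amul G (ainv G (ee i i i u)) h)))) (amul G (ainv G (ee i i i u)) h)))))"
    by (rule Pcmp) (use m mi c in auto)
  show ?thesis unfolding a b R_simps T_simps maps 2 using m mi tg key by (simp add: cmp_formula)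
qed

lemma phi_functor: "G_functor G T R phi0 phi1"
  unfolding G_functor_def cont_functor_def
  apply (intro conjI)
  subgoal by (rule cont_phi0)
  subgoal by (rule cont_phi1)
  subgoal using iI by (auto simp: D1)
  subgoal using phi_cmp by blast
  subgoal using iI by auto
  subgoal using iI by auto
  subgoal using iI by auto
  done

lemma eps_nat: "G0_nat_iso G R R (phi0 \<circ> psi0) (phi1 \<circ> psi1) id id eps"
  unfolding G0_nat_iso_def cont_nat_trans_def
  apply (intro conjI)
  subgoal by (rule cont_eps)
  subgoal using iI by auto
  subgoal
  proof
    fix a assume "a \<in> topspace (arT R)"
    then obtain j k v g where a: "a = ((j,k),(v,g))" and m: "j \<in> I" "k \<in> I" "v \<in> topspace X" "v \<in> U j" "v \<in> U k" "g \<in> GA" "v \<in> U i"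
      by (cases a) auto
    note mi = iI
    let ?y = "omul G (xx i k v) (omul G (oinv G (xx j k v)) (tgt G g))"
    have c1: "tgt G (amul G (ainv G (ee i i i v)) (amul G (ee i j k v) (amul G (idn G (xx i j v)) g))) = omul G (xx i i v) (src G (idn G ?y))"
      using m mi by (simp add: D1 C1'')
    have 1: "cmp P ((i,i),(v,amul G (ainv G (ee i i i v)) (amul G (ee i j k v) (amul G (idn G (xx i j v)) g)))) ((i,k),(v, idn G ?y)) =
      ((i,k),(v, amul G (ee i i k v) (amul G (amul G (ainv G (ee i i i v)) (amul G (ee i j k v) (amul G (idn G (xx i j v)) g))) (amul G (ainv G (idn G (src G (idn G ?y)))) (idn G ?y)))))"
      by (rule Pcmp) (use m mi c1 in auto)
    have 2: "cmp P ((i,j),(v, idn G (omul G (xx i j v) (src G g)))) ((j,k),(v,g)) =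
      ((i,k),(v, amul G (ee i j k v) (amul G (idn G (omul G (xx i j v) (src G g))) (amul G (ainv G (idn G (src G g))) g))))"
      by (rule Pcmp) (use m mi in auto)
    show "cmp R ((phi1 \<circ> psi1) a) (eps (tgt R a)) = cmp R (eps (src R a)) (id a)"
      unfolding a R_simps P_simps o_def maps id_def 1 2 using m mi by (simp add: D2[of i k v])
  qed
  subgoal using iI by auto
  done

lemma bet_nat: "G0_nat_iso G T T id id (psi0 \<circ> phi0) (psi1 \<circ> phi1) bet"
  unfolding G0_nat_iso_def cont_nat_trans_def
  apply (intro conjI)
  subgoal by (rule cont_bet)
  subgoal using iI by (auto simp: D1)
  subgoal
  proof
    fix a assume "a \<in> topspace (arT T)"
    then obtain v h where a: "a = (v,h)" and m: "v \<in> topspace X" "v \<in> U i" "h \<in> GA"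
      by (cases a) auto
    note mi = iI
    let ?E = "ee i i i v" and ?T = "idn G (tgt G (ee i i i v))"
    have gp1: "amul G ?E ?E = amul G ?T (amul G ?E (amul G (ainv G ?T) ?E))" using GP[of ?E ?E] m mi by simp
    have k1: "amul G ?T (amul G ?E (amul G (ainv G ?T) r)) = amul G ?E r" if "r \<in> GA" for r
    proof -
      have "amul G (amul G (amul G ?E ?E) (ainv G ?E)) r = amul G (amul G (amul G ?T (amul G ?E (amul G (ainv G ?T) ?E))) (ainv G ?E)) r"
        unfolding gp1 ..
      then show ?thesis using m mi that by simp
    qed
    let ?w = "amul G h (ainv G (idn G (tgt G h)))"
    have gp: "amul G ?w (ainv G ?E) = amul G (ainv G ?E) ?w" using GP[of ?w "ainv G ?E"] m mi by simp
    have k2: "amul G (amul G ?w (ainv G ?E)) (idn G (tgt G h)) = amul G (ainv G ?E) h"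
      unfolding gp using m mi by simp
    show "cmp T (id a) (bet (tgt T a)) = cmp T (bet (src T a)) ((psi1 \<circ> phi1) a)"
      unfolding a using m mi k2 by (simp add: cmp_formula D1 k1)
  qed
  subgoal using iI by auto
  done


lemma chart_ok: "trivializing_chart G X P \<pi>c0 \<pi>c1 (U i) psi0 psi1 phi0 phi1 eps"
  unfolding trivializing_chart_def
  apply (intro conjI)
  subgoal using opn iI by blast
  subgoal unfolding G_equivalence_def G_pseudo_inverse_def using psi_functor phi_functor eps_nat bet_nat by blast
  subgoal unfolding G_pseudo_inverse_def using phi_functor eps_nat bet_nat by blast
  subgoal by (rule eps_nat)
  subgoal by auto
  subgoal by auto
  subgoal by auto
  subgoal by auto
  done

end

theorem lemma5:
  fixes G :: "('g0, 'g1) twogrp" and X :: "'x topology"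
    and I :: "'i set" and U :: "'i \<Rightarrow> 'x set"
    and xx :: "'i \<Rightarrow> 'i \<Rightarrow> 'x \<Rightarrow> 'g0" and ee :: "'i \<Rightarrow> 'i \<Rightarrow> 'i \<Rightarrow> 'x \<Rightarrow> 'g1"
  assumes "topological_2group G"
    and "\<forall>i \<in> I. openin X (U i)"
    and "(\<Union>i \<in> I. U i) = topspace X"
    and "cech_cocycle G X I U xx ee"
  shows "principal_bundle G X (Pc G X I U xx ee) \<pi>c0 \<pi>c1 \<and>
         trivializing_cover G X (Pc G X I U xx ee) \<pi>c0 \<pi>c1 (U ` I)"
proof -
  interpret cc G X I U xx ee
    by (rule cc.intro) (use assms in \<open>auto simp: tg_def cc_axioms_def\<close>)
  have tc: "trivializing_cover G X (Pc G X I U xx ee) \<pi>c0 \<pi>c1 (U ` I)"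
    unfolding trivializing_cover_def
  proof (intro conjI ballI)
    show "\<Union> (U ` I) = topspace X" using assms(3) by simp
    fix V assume "V \<in> U ` I"
    then obtain i where i: "i \<in> I" "V = U i" by blast
    interpret chart G X I U xx ee i
      by (rule chart.intro) (use assms i in \<open>auto simp: tg_def cc_axioms_def chart_axioms_def cc_def\<close>)
    show "\<exists>\<psi>0 \<psi>1 \<phi>0 \<phi>1 \<epsilon>. trivializing_chart G X (Pc G X I U xx ee) \<pi>c0 \<pi>c1 V \<psi>0 \<psi>1 \<phi>0 \<phi>1 \<epsilon>"
      using chart_ok i by blast
  qed
  show ?thesis unfolding principal_bundle_def using P_G2space P_functor tc by blast
qed

end
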